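(* Let $\mathcal K$ be finite or countably infinite, and let $\mathcal K$, $(\mathsf Z_k,\mathcal A_k,\Psi_k,\Phi_k)$, $(\mathsf X,\mathcal B,\Pi)$ and $P$ (with $\Pi P=\Pi$) be as in the context. Let $t$ be a positive integer and suppose that for each $k\in\mathcal K$ there is a Markov transition kernel $P_k:\mathsf Z_k\times\mathcal A_k\to[0,1]$ and a constant $c_k>0$ such that (i) $\Phi_kP_k=\Phi_k$, (ii) $\|P_k^t\|_{\Phi_k}<1$, (iii) $P((k,z),\{k\}\times A)\ge c_kP_k(z,A)$ for all $z\in\mathsf Z_k$, $A\in\mathcal A_k$. Then $$1-\|P^t\|_\Pi^4\ \ge\ \Big(\inf_{k\in\mathcal K}c_k^t\Big)^2\Big(1-\sup_{k\in\mathcal K}\|P_k^t\|_{\Phi_k}^2\Big)\big[1-\lambda_1(M_P)\big].$$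
   Context: $\mathcal K$ is a finite or countably infinite set; for each $k\in\mathcal K$, $(\mathsf Z_k,\mathcal A_k)$ is a nonempty measurable space, $\Psi_k$ a nonzero finite measure on it with $\sum_{k}\Psi_k(\mathsf Z_k)<\infty$, and $\Phi_k=\Psi_k/\Psi_k(\mathsf Z_k)$. $\mathsf X=\bigcup_k\{k\}\times\mathsf Z_k$, $\mathcal B$ is generated by the sets $\{k\}\times A$ ($A\in\mathcal A_k$), and $\Pi(\{k\}\times A)=\Psi_k(A)/\sum_{k'}\Psi_{k'}(\mathsf Z_{k'})$. $P$ is a Markov transition kernel (Mtk) on $(\mathsf X,\mathcal B)$ with $\Pi P=\Pi$. For a probability measure $\omega$ and an Mtk $T$ with $\omega T=\omega$, $\|T\|_\omega$ is the operator norm of $f\mapsto\int T(\cdot,dy)f(y)$ on $L_0^2(\omega)=\{f\in L^2(\omega):\int f\,d\omega=0\}$. $\bar P$ is the Mtk on $\mathcal K$ with $\bar P(k,\{k'\})=\frac{1}{\Psi_k(\mathsf Z_k)}\sum_{k''\in\mathcal K}\int_{\mathsf Z_{k''}}\Psi_{k''}(dz)P((k'',z),\{k\}\times\mathsf Z_k)P((k'',z),\{k'\}\times\mathsf Z_{k'})$; it is reversible and positive semi-definite with respect to $\bar\Pi(\{k\})=\Pi(\{k\}\times\mathsf Z_k)$. $M_P$ denotes the matrix of $\bar P$, and $\lambda_1(M_P)$ denotes $\|\bar P\|_{\bar\Pi}$, the norm of $\bar P$ on $L_0^2(\bar\Pi)$; when $\mathcal K$ is finite this is the second largest eigenvalue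 (counting multiplicity) of $M_P$. *)

theory Defs
  imports "HOL-Probability.Probability"
begin

text \<open>Disjoint-union measurable space X = U_k {k} x Z_k, with sigma-algebra generated
  by the sets {k} x A, A in A_k.  Psi k carries (Z_k, A_k) together with Psi_k.\<close>
definition Xgen :: "'k set \<Rightarrow> ('k \<Rightarrow> 'z measure) \<Rightarrow> ('k \<times> 'z) set set" where
  "Xgen K Psi = {{k} \<times> A | k A. k \<in> K \<and> A \<in> sets (Psi k)}"

definition Xspace :: "'k set \<Rightarrow> ('k \<Rightarrow> 'z measure) \<Rightarrow> ('k \<times> 'z) set" where
  "Xspace K Psi = (SIGMA k:K. space (Psi k))"

definition total_mass :: "'k set \<Rightarrow> ('k \<Rightarrow> 'z measure) \<Rightarrow> ennreal" where
  "total_mass K Psi = (\<integral>\<^sup>+ k. emeasure (Psi k) (space (Psi k)) \<partial>count_space K)"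

definition PiX :: "'k set \<Rightarrow> ('k \<Rightarrow> 'z measure) \<Rightarrow> ('k \<times> 'z) measure" where
  "PiX K Psi = measure_of (Xspace K Psi) (Xgen K Psi)
     (\<lambda>B. (\<integral>\<^sup>+ k. emeasure (Psi k) (Pair k -` B \<inter> space (Psi k)) \<partial>count_space K)
          / total_mass K Psi)"

definition normalise :: "'z measure \<Rightarrow> 'z measure" where
  "normalise M = scale_measure (inverse (emeasure M (space M))) M"

fun kpow :: "'a measure \<Rightarrow> ('a \<Rightarrow> 'a measure) \<Rightarrow> nat \<Rightarrow> 'a \<Rightarrow> 'a measure" where
  "kpow M P 0 = return M"
| "kpow M P (Suc n) = (\<lambda>x. bind (P x) (kpow M P n))"

definition opnorm :: "'a measure \<Rightarrow> ('a \<Rightarrow> 'a measure) \<Rightarrow> real" where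
  "opnorm \<omega> T = Sup {sqrt (\<integral>x. (\<integral>y. f y \<partial>T x)\<^sup>2 \<partial>\<omega>) | f.
       f \<in> borel_measurable \<omega> \<and> integrable \<omega> (\<lambda>x. (f x)\<^sup>2) \<and>
       (\<integral>x. f x \<partial>\<omega>) = 0 \<and> (\<integral>x. (f x)\<^sup>2 \<partial>\<omega>) \<le> 1}"

definition barPi :: "'k set \<Rightarrow> ('k \<Rightarrow> 'z measure) \<Rightarrow> 'k measure" where
  "barPi K Psi = density (count_space K) (\<lambda>k. emeasure (PiX K Psi) ({k} \<times> space (Psi k)))"

definition barP_weight :: "'k set \<Rightarrow> ('k \<Rightarrow> 'z measure) \<Rightarrow> ('k \<times> 'z \<Rightarrow> ('k \<times> 'z) measure)
    \<Rightarrow> 'k \<Rightarrow> 'k \<Rightarrow> ennreal" where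
  "barP_weight K Psi P k k' =
     (\<integral>\<^sup>+ k''. (\<integral>\<^sup>+ z. emeasure (P (k'', z)) ({k} \<times> space (Psi k)) *
                        emeasure (P (k'', z)) ({k'} \<times> space (Psi k')) \<partial>Psi k'') \<partial>count_space K)
     / emeasure (Psi k) (space (Psi k))"

definition barP :: "'k set \<Rightarrow> ('k \<Rightarrow> 'z measure) \<Rightarrow> ('k \<times> 'z \<Rightarrow> ('k \<times> 'z) measure)
    \<Rightarrow> 'k \<Rightarrow> 'k measure" where
  "barP K Psi P k = density (count_space K) (barP_weight K Psi P k)"

definition lambda1 :: "'k set \<Rightarrow> ('k \<Rightarrow> 'z measure) \<Rightarrow> ('k \<times> 'z \<Rightarrow> ('k \<times> 'z) measure) \<Rightarrow> real" where
  "lambda1 K Psi P = opnorm (barPi K Psi) (barP K Psi P)"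

end

theory Submission
  imports Defs
begin


lemma prob_sq_le:
  fixes f :: "'a \<Rightarrow> real"
  assumes "prob_space N" "integrable N f" "integrable N (\<lambda>x. (f x)\<^sup>2)"
  shows "(\<integral>x. f x \<partial>N)\<^sup>2 \<le> (\<integral>x. (f x)\<^sup>2 \<partial>N)"
proof -
  interpret prob_space N by fact
  have "0 \<le> variance f" by (rule variance_positive)
  then show ?thesis using variance_eq[OF assms(2,3)] by simp
qed

locale mk =
  fixes M :: "'a measure" and T :: "'a \<Rightarrow> 'a measure"
  assumes ps: "prob_space M" and T: "T \<in> M \<rightarrow>\<^sub>M prob_algebra M" and inv: "bind M T = M"
begin

lemma T_sub: "T \<in> M \<rightarrow>\<^sub>M subprob_algebra M"
  using measurable_prob_algebraD[OF T] .

lemma T_prob: "x \<in> space M \<Longrightarrow> prob_space (T x)"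
  using measurable_space[OF T] by (auto simp: space_prob_algebra)

lemma T_sets: "x \<in> space M \<Longrightarrow> sets (T x) = sets M"
  using measurable_space[OF T] by (auto simp: space_prob_algebra)

lemma T_space: "x \<in> space M \<Longrightarrow> space (T x) = space M"
  using T_sets by (rule sets_eq_imp_space_eq)

lemma nn_inv:
  assumes "g \<in> borel_measurable M"
  shows "(\<integral>\<^sup>+x. \<integral>\<^sup>+y. g y \<partial>T x \<partial>M) = (\<integral>\<^sup>+x. g x \<partial>M)"
proof -
  have "(\<integral>\<^sup>+x. g x \<partial>(M \<bind> T)) = (\<integral>\<^sup>+x. \<integral>\<^sup>+y. g y \<partial>T x \<partial>M)"
    by (rule nn_integral_bind[OF assms T_sub])
  then show ?thesis using inv by simp
qed

lemma meas_Tf[measurable]: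
  fixes f :: "'a \<Rightarrow> real"
  assumes "f \<in> borel_measurable M"
  shows "(\<lambda>x. \<integral>y. f y \<partial>T x) \<in> borel_measurable M"
  using measurable_compose[OF T_sub integral_measurable_subprob_algebra[OF assms]] by simp

lemma meas_Tfnn[measurable]:
  assumes "f \<in> borel_measurable M"
  shows "(\<lambda>x. \<integral>\<^sup>+y. f y \<partial>T x) \<in> borel_measurable M"
  using measurable_compose[OF T_sub nn_integral_measurable_subprob_algebra[OF assms]] by simp

lemma AE_integrable:
  fixes g :: "'a \<Rightarrow> real"
  assumes g: "integrable M g"
  shows "AE x in M. integrable (T x) g"
proof -
  have gm: "g \<in> borel_measurable M" using g by auto
  have "(\<integral>\<^sup>+x. \<integral>\<^sup>+y. ennreal (norm (g y)) \<partial>T x \<partial>M) = (\<integral>\<^sup>+x. ennreal (norm (g x)) \<partial>M)"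
    by (rule nn_inv) (use gm in measurable)
  also have "\<dots> < \<infinity>" using g by (simp add: integrable_iff_bounded)
  finally have lt: "(\<integral>\<^sup>+x. \<integral>\<^sup>+y. ennreal (norm (g y)) \<partial>T x \<partial>M) \<noteq> \<infinity>" by auto
  have meas: "(\<lambda>x. \<integral>\<^sup>+y. ennreal (norm (g y)) \<partial>T x) \<in> borel_measurable M"
    by (rule meas_Tfnn) (use gm in measurable)
  have "AE x in M. (\<integral>\<^sup>+y. ennreal (norm (g y)) \<partial>T x) \<noteq> \<infinity>"
    by (rule nn_integral_PInf_AE[OF meas lt])
  then show ?thesis
  proof (rule AE_mp, intro AE_I2 impI)
    fix x assume x: "x \<in> space M" and fin: "(\<integral>\<^sup>+y. ennreal (norm (g y)) \<partial>T x) \<noteq> \<infinity>"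
    show "integrable (T x) g"
      using fin gm T_sets[OF x]
      by (auto simp: integrable_iff_bounded top.not_eq_extremum cong: measurable_cong_sets)
  qed
qed

lemma AE_L2:
  fixes f :: "'a \<Rightarrow> real"
  assumes f: "f \<in> borel_measurable M" and f2: "integrable M (\<lambda>x. (f x)\<^sup>2)"
  shows "AE x in M. integrable (T x) f \<and> integrable (T x) (\<lambda>y. (f y)\<^sup>2)"
proof -
  have "AE x in M. integrable (T x) (\<lambda>y. (f y)\<^sup>2)" by (rule AE_integrable[OF f2])
  then show ?thesis
  proof (rule AE_mp, intro AE_I2 impI conjI)
    fix x assume x: "x \<in> space M" and i: "integrable (T x) (\<lambda>y. (f y)\<^sup>2)"
    interpret p: prob_space "T x" using T_prob[OF x] .
    have fm: "f \<in> borel_measurable (T x)" using f T_sets[OF x] by (simp cong: measurable_cong_sets)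
    show "integrable (T x) f"
      by (rule p.square_integrable_imp_integrable[OF fm]) (use i in \<open>simp add: power2_eq_square\<close>)
    show "integrable (T x) (\<lambda>y. (f y)\<^sup>2)" by fact
  qed
qed

lemma integral_inv_nonneg:
  fixes g :: "'a \<Rightarrow> real"
  assumes g: "integrable M g" and nn: "\<And>x. x \<in> space M \<Longrightarrow> 0 \<le> g x"
  shows "(\<integral>x. (\<integral>y. g y \<partial>T x) \<partial>M) = (\<integral>x. g x \<partial>M)"
proof -
  have gm: "g \<in> borel_measurable M" using g by auto
  have ae: "AE x in M. (\<integral>\<^sup>+y. ennreal (g y) \<partial>T x) = ennreal (\<integral>y. g y \<partial>T x)"
    using AE_integrable[OF g]
  proof (rule AE_mp, intro AE_I2 impI)
    fix x assume x: "x \<in> space M" and i: "integrable (T x) g"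
    show "(\<integral>\<^sup>+y. ennreal (g y) \<partial>T x) = ennreal (\<integral>y. g y \<partial>T x)"
      by (rule nn_integral_eq_integral[OF i]) (use nn T_space[OF x] in auto)
  qed
  have "(\<integral>x. g x \<partial>M) = enn2real (\<integral>\<^sup>+x. ennreal (g x) \<partial>M)"
    by (rule integral_eq_nn_integral) (use gm nn in auto)
  also have "(\<integral>\<^sup>+x. ennreal (g x) \<partial>M) = (\<integral>\<^sup>+x. \<integral>\<^sup>+y. ennreal (g y) \<partial>T x \<partial>M)"
    by (rule nn_inv[symmetric]) (use gm in measurable)
  also have "\<dots> = (\<integral>\<^sup>+x. ennreal (\<integral>y. g y \<partial>T x) \<partial>M)"
    by (rule nn_integral_cong_AE[OF ae])
  also have "enn2real \<dots> = (\<integral>x. (\<integral>y. g y \<partial>T x) \<partial>M)"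
  proof (rule integral_eq_nn_integral[symmetric])
    show "(\<lambda>x. \<integral>y. g y \<partial>T x) \<in> borel_measurable M" using gm by measurable
    show "AE x in M. 0 \<le> (\<integral>y. g y \<partial>T x)"
      by (intro AE_I2 integral_nonneg_AE) (use nn T_space in auto)
  qed
  finally show ?thesis ..
qed

lemma integrable_T_nonneg:
  fixes g :: "'a \<Rightarrow> real"
  assumes g: "integrable M g" and nn: "\<And>x. x \<in> space M \<Longrightarrow> 0 \<le> g x"
  shows "integrable M (\<lambda>x. \<integral>y. g y \<partial>T x)"
proof -
  have gm: "g \<in> borel_measurable M" using g by auto
  have "(\<integral>\<^sup>+x. ennreal (norm (\<integral>y. g y \<partial>T x)) \<partial>M) \<le> (\<integral>\<^sup>+x. \<integral>\<^sup>+y. ennreal (g y) \<partial>T x \<partial>M)"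
  proof (rule nn_integral_mono_AE)
    show "AE x in M. ennreal (norm (\<integral>y. g y \<partial>T x)) \<le> (\<integral>\<^sup>+y. ennreal (g y) \<partial>T x)"
      using AE_integrable[OF g]
    proof (rule AE_mp, intro AE_I2 impI)
      fix x assume x: "x \<in> space M" and i: "integrable (T x) g"
      have "0 \<le> (\<integral>y. g y \<partial>T x)" by (intro integral_nonneg_AE AE_I2) (use nn T_space[OF x] in auto)
      moreover have "(\<integral>\<^sup>+y. ennreal (g y) \<partial>T x) = ennreal (\<integral>y. g y \<partial>T x)"
        by (rule nn_integral_eq_integral[OF i]) (use nn T_space[OF x] in auto)
      ultimately show "ennreal (norm (\<integral>y. g y \<partial>T x)) \<le> (\<integral>\<^sup>+y. ennreal (g y) \<partial>T x)"
        by simp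
    qed
  qed
  also have "\<dots> = (\<integral>\<^sup>+x. ennreal (g x) \<partial>M)" by (rule nn_inv) (use gm in measurable)
  also have "\<dots> = (\<integral>\<^sup>+x. ennreal (norm (g x)) \<partial>M)"
    by (intro nn_integral_cong) (use nn in auto)
  also have "\<dots> < \<infinity>" using g by (simp add: integrable_iff_bounded)
  finally show ?thesis using gm by (simp add: integrable_iff_bounded) measurable
qed

lemma integral_inv:
  fixes g :: "'a \<Rightarrow> real"
  assumes g: "integrable M g"
  shows "integrable M (\<lambda>x. \<integral>y. g y \<partial>T x)" "(\<integral>x. (\<integral>y. g y \<partial>T x) \<partial>M) = (\<integral>x. g x \<partial>M)"
proof -
  define gp where "gp x = max (g x) 0" for x
  define gn where "gn x = max (- g x) 0" for x
  have ip: "integrable M gp" unfolding gp_def using g by auto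
  have inn: "integrable M gn" unfolding gn_def using g by auto
  have ae: "AE x in M. (\<integral>y. g y \<partial>T x) = (\<integral>y. gp y \<partial>T x) - (\<integral>y. gn y \<partial>T x)"
    using AE_integrable[OF g]
  proof (rule AE_mp, intro AE_I2 impI)
    fix x assume "x \<in> space M" "integrable (T x) g"
    then have "integrable (T x) gp" "integrable (T x) gn" unfolding gp_def gn_def by auto
    moreover have "g = (\<lambda>y. gp y - gn y)" unfolding gp_def gn_def by (auto simp: fun_eq_iff)
    ultimately show "(\<integral>y. g y \<partial>T x) = (\<integral>y. gp y \<partial>T x) - (\<integral>y. gn y \<partial>T x)"
      by simp
  qed
  have i1: "integrable M (\<lambda>x. \<integral>y. gp y \<partial>T x)" by (rule integrable_T_nonneg[OF ip]) (simp add: gp_def)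
  have i2: "integrable M (\<lambda>x. \<integral>y. gn y \<partial>T x)" by (rule integrable_T_nonneg[OF inn]) (simp add: gn_def)
  have gm: "g \<in> borel_measurable M" using g by auto
  show "integrable M (\<lambda>x. \<integral>y. g y \<partial>T x)"
  proof (rule integrable_cong_AE_imp[OF Bochner_Integration.integrable_diff[OF i1 i2]])
    show "(\<lambda>x. \<integral>y. g y \<partial>T x) \<in> borel_measurable M" using gm by measurable
    show "AE x in M. (\<integral>y. gp y \<partial>T x) - (\<integral>y. gn y \<partial>T x) = (\<integral>y. g y \<partial>T x)"
      using ae by eventually_elim simp
  qed
  have "(\<integral>x. (\<integral>y. g y \<partial>T x) \<partial>M) = (\<integral>x. (\<integral>y. gp y \<partial>T x) - (\<integral>y. gn y \<partial>T x) \<partial>M)"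
  proof (rule integral_cong_AE)
    show "(\<lambda>x. \<integral>y. g y \<partial>T x) \<in> borel_measurable M" using gm by measurable
    show "(\<lambda>x. (\<integral>y. gp y \<partial>T x) - (\<integral>y. gn y \<partial>T x)) \<in> borel_measurable M"
      using i1 i2 by auto
  qed (use ae in auto)
  also have "\<dots> = (\<integral>x. gp x \<partial>M) - (\<integral>x. gn x \<partial>M)"
    using integral_inv_nonneg[OF ip] integral_inv_nonneg[OF inn] i1 i2
    by (simp add: gp_def gn_def)
  also have "\<dots> = (\<integral>x. g x \<partial>M)"
  proof -
    have "g = (\<lambda>y. gp y - gn y)" unfolding gp_def gn_def by (auto simp: fun_eq_iff)
    then show ?thesis using ip inn by simp
  qed
  finally show "(\<integral>x. (\<integral>y. g y \<partial>T x) \<partial>M) = (\<integral>x. g x \<partial>M)" .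
qed

lemma L2_contr:
  fixes f :: "'a \<Rightarrow> real"
  assumes f: "f \<in> borel_measurable M" and f2: "integrable M (\<lambda>x. (f x)\<^sup>2)"
  shows "integrable M (\<lambda>x. (\<integral>y. f y \<partial>T x)\<^sup>2)"
    "(\<integral>x. (\<integral>y. f y \<partial>T x)\<^sup>2 \<partial>M) \<le> (\<integral>x. (f x)\<^sup>2 \<partial>M)"
proof -
  have ih: "integrable M (\<lambda>x. \<integral>y. (f y)\<^sup>2 \<partial>T x)" by (rule integrable_T_nonneg[OF f2]) simp
  have eq: "(\<integral>x. (\<integral>y. (f y)\<^sup>2 \<partial>T x) \<partial>M) = (\<integral>x. (f x)\<^sup>2 \<partial>M)"
    by (rule integral_inv_nonneg[OF f2]) simp
  have ae: "AE x in M. (\<integral>y. f y \<partial>T x)\<^sup>2 \<le> (\<integral>y. (f y)\<^sup>2 \<partial>T x)"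
    using AE_L2[OF f f2]
  proof (rule AE_mp, intro AE_I2 impI)
    fix x assume x: "x \<in> space M" and i: "integrable (T x) f \<and> integrable (T x) (\<lambda>y. (f y)\<^sup>2)"
    show "(\<integral>y. f y \<partial>T x)\<^sup>2 \<le> (\<integral>y. (f y)\<^sup>2 \<partial>T x)"
      using prob_sq_le[OF T_prob[OF x]] i by auto
  qed
  show i: "integrable M (\<lambda>x. (\<integral>y. f y \<partial>T x)\<^sup>2)"
  proof (rule Bochner_Integration.integrable_bound[OF ih])
    show "(\<lambda>x. (\<integral>y. f y \<partial>T x)\<^sup>2) \<in> borel_measurable M" using f by measurable
    show "AE x in M. norm ((\<integral>y. f y \<partial>T x)\<^sup>2) \<le> norm (\<integral>y. (f y)\<^sup>2 \<partial>T x)"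
      using ae by eventually_elim auto
  qed
  have "(\<integral>x. (\<integral>y. f y \<partial>T x)\<^sup>2 \<partial>M) \<le> (\<integral>x. (\<integral>y. (f y)\<^sup>2 \<partial>T x) \<partial>M)"
    by (rule integral_mono_AE[OF i ih ae])
  then show "(\<integral>x. (\<integral>y. f y \<partial>T x)\<^sup>2 \<partial>M) \<le> (\<integral>x. (f x)\<^sup>2 \<partial>M)" using eq by simp
qed

definition "oset = {sqrt (\<integral>x. (\<integral>y. f y \<partial>T x)\<^sup>2 \<partial>M) | f.
       f \<in> borel_measurable M \<and> integrable M (\<lambda>x. (f x)\<^sup>2) \<and>
       (\<integral>x. f x \<partial>M) = 0 \<and> (\<integral>x. (f x)\<^sup>2 \<partial>M) \<le> 1}"

lemma opnorm_eq: "opnorm M T = Sup oset"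
  unfolding opnorm_def oset_def ..

lemma oset_le1:
  assumes "v \<in> oset" shows "v \<le> 1"
proof -
  obtain f :: "'a \<Rightarrow> real" where f: "f \<in> borel_measurable M" "integrable M (\<lambda>x. (f x)\<^sup>2)"
    "(\<integral>x. (f x)\<^sup>2 \<partial>M) \<le> 1" and vd: "v = sqrt (\<integral>x. (\<integral>y. f y \<partial>T x)\<^sup>2 \<partial>M)"
    using assms unfolding oset_def by blast
  have "(\<integral>x. (\<integral>y. f y \<partial>T x)\<^sup>2 \<partial>M) \<le> 1" using L2_contr(2)[OF f(1,2)] f(3) by linarith
  then show ?thesis unfolding vd by simp
qed

lemma oset_nonneg: "v \<in> oset \<Longrightarrow> 0 \<le> v"
  unfolding oset_def by auto

lemma zero_in_oset: "0 \<in> oset"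
  unfolding oset_def by (rule CollectI, rule exI[of _ "\<lambda>_. 0"]) simp

lemma bdd_oset: "bdd_above oset"
  by (rule bdd_aboveI[where M=1]) (rule oset_le1)

lemma opnorm_nonneg: "0 \<le> opnorm M T"
  unfolding opnorm_eq using zero_in_oset bdd_oset by (rule cSup_upper)

lemma opnorm_le1: "opnorm M T \<le> 1"
  unfolding opnorm_eq using zero_in_oset oset_le1 by (intro cSup_least) auto

lemma opnorm_bound:
  fixes f :: "'a \<Rightarrow> real"
  assumes f: "f \<in> borel_measurable M" and f2: "integrable M (\<lambda>x. (f x)\<^sup>2)" and f0: "(\<integral>x. f x \<partial>M) = 0"
  shows "(\<integral>x. (\<integral>y. f y \<partial>T x)\<^sup>2 \<partial>M) \<le> (opnorm M T)\<^sup>2 * (\<integral>x. (f x)\<^sup>2 \<partial>M)"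
proof -
  define n where "n = (\<integral>x. (f x)\<^sup>2 \<partial>M)"
  have n0: "0 \<le> n" unfolding n_def by simp
  show ?thesis
  proof (cases "n = 0")
    case True
    then show ?thesis using L2_contr(2)[OF f f2] by (simp add: n_def)
  next
    case False
    with n0 have np: "0 < n" by simp
    define g where "g x = f x / sqrt n" for x
    have g2: "(\<lambda>x. (g x)\<^sup>2) = (\<lambda>x. (f x)\<^sup>2 / n)" using np by (auto simp: g_def fun_eq_iff power_divide)
    have gm: "g \<in> borel_measurable M" unfolding g_def using f by measurable
    have gi: "integrable M (\<lambda>x. (g x)\<^sup>2)" unfolding g2 using f2 by simp
    have g0: "(\<integral>x. g x \<partial>M) = 0" unfolding g_def using f0 by simp
    have gn: "(\<integral>x. (g x)\<^sup>2 \<partial>M) \<le> 1" unfolding g2 using np by (simp add: n_def)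
    have "sqrt (\<integral>x. (\<integral>y. g y \<partial>T x)\<^sup>2 \<partial>M) \<in> oset" unfolding oset_def using gm gi g0 gn by blast
    then have le: "sqrt (\<integral>x. (\<integral>y. g y \<partial>T x)\<^sup>2 \<partial>M) \<le> opnorm M T"
      unfolding opnorm_eq using bdd_oset by (rule cSup_upper)
    have "(\<lambda>x. (\<integral>y. g y \<partial>T x)\<^sup>2) = (\<lambda>x. (\<integral>y. f y \<partial>T x)\<^sup>2 / n)"
      using np by (auto simp: g_def fun_eq_iff power_divide)
    then have "(\<integral>x. (\<integral>y. g y \<partial>T x)\<^sup>2 \<partial>M) = (\<integral>x. (\<integral>y. f y \<partial>T x)\<^sup>2 \<partial>M) / n" by simp
    moreover have "(\<integral>x. (\<integral>y. g y \<partial>T x)\<^sup>2 \<partial>M) \<le> (opnorm M T)\<^sup>2"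
    proof -
      have q0: "0 \<le> (\<integral>x. (\<integral>y. g y \<partial>T x)\<^sup>2 \<partial>M)" by simp
      have "(\<integral>x. (\<integral>y. g y \<partial>T x)\<^sup>2 \<partial>M) = (sqrt (\<integral>x. (\<integral>y. g y \<partial>T x)\<^sup>2 \<partial>M))\<^sup>2"
        using q0 by simp
      also have "\<dots> \<le> (opnorm M T)\<^sup>2" by (rule power_mono[OF le]) simp
      finally show ?thesis .
    qed
    ultimately have "(\<integral>x. (\<integral>y. f y \<partial>T x)\<^sup>2 \<partial>M) / n \<le> (opnorm M T)\<^sup>2" by simp
    then show ?thesis using np by (simp add: n_def[symmetric] divide_le_eq mult.commute)
  qed
qed

lemma opnorm_approx:
  assumes e: "0 < e"
  obtains f :: "'a \<Rightarrow> real" where "f \<in> borel_measurable M" "integrable M (\<lambda>x. (f x)\<^sup>2)"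
    "(\<integral>x. f x \<partial>M) = 0" "(\<integral>x. (f x)\<^sup>2 \<partial>M) \<le> 1"
    "(opnorm M T)\<^sup>2 - e \<le> (\<integral>x. (\<integral>y. f y \<partial>T x)\<^sup>2 \<partial>M)"
proof -
  have "opnorm M T - e/2 < Sup oset" using e by (simp add: opnorm_eq)
  then obtain v where v: "v \<in> oset" "opnorm M T - e/2 < v"
    using zero_in_oset by (metis less_cSupE empty_iff)
  then obtain f :: "'a \<Rightarrow> real" where f: "f \<in> borel_measurable M" "integrable M (\<lambda>x. (f x)\<^sup>2)"
    "(\<integral>x. f x \<partial>M) = 0" "(\<integral>x. (f x)\<^sup>2 \<partial>M) \<le> 1" and vd: "v = sqrt (\<integral>x. (\<integral>y. f y \<partial>T x)\<^sup>2 \<partial>M)"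
    unfolding oset_def by blast
  have q0: "0 \<le> (\<integral>x. (\<integral>y. f y \<partial>T x)\<^sup>2 \<partial>M)" by simp
  have vv: "v\<^sup>2 = (\<integral>x. (\<integral>y. f y \<partial>T x)\<^sup>2 \<partial>M)" using vd q0 by simp
  have v0: "0 \<le> v" using oset_nonneg[OF v(1)] .
  have o0: "0 \<le> opnorm M T" "opnorm M T \<le> 1" using opnorm_nonneg opnorm_le1 .
  have sq: "(opnorm M T)\<^sup>2 \<le> opnorm M T" using o0 by (simp add: power2_eq_square mult_left_le)
  have eo: "e * opnorm M T \<le> e" using o0 e by (simp add: mult_left_le)
  have "(opnorm M T)\<^sup>2 - e \<le> v\<^sup>2"
  proof (cases "opnorm M T \<le> e/2")
    case True
    then show ?thesis using sq e zero_le_power2[of v] by linarith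
  next
    case False
    then have "(opnorm M T - e/2)\<^sup>2 \<le> v\<^sup>2" using v(2) by (intro power_mono) auto
    moreover have "(opnorm M T - e/2)\<^sup>2 = (opnorm M T)\<^sup>2 - e * opnorm M T + (e/2)\<^sup>2"
      by (simp add: power2_diff)
    ultimately show ?thesis using eo zero_le_power2[of "e/2"] by linarith
  qed
  then show ?thesis using that f vv by simp
qed

lemma var_int:
  fixes f :: "'a \<Rightarrow> real"
  assumes f: "f \<in> borel_measurable M" and f2: "integrable M (\<lambda>x. (f x)\<^sup>2)"
  shows "(\<integral>\<^sup>+x. (\<integral>\<^sup>+y. ennreal ((f y - (\<integral>y. f y \<partial>T x))\<^sup>2) \<partial>T x) \<partial>M)
         = ennreal ((\<integral>x. (f x)\<^sup>2 \<partial>M) - (\<integral>x. (\<integral>y. f y \<partial>T x)\<^sup>2 \<partial>M))"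
proof -
  have ih: "integrable M (\<lambda>x. \<integral>y. (f y)\<^sup>2 \<partial>T x)" by (rule integrable_T_nonneg[OF f2]) simp
  have eq: "(\<integral>x. (\<integral>y. (f y)\<^sup>2 \<partial>T x) \<partial>M) = (\<integral>x. (f x)\<^sup>2 \<partial>M)"
    by (rule integral_inv_nonneg[OF f2]) simp
  note L = L2_contr[OF f f2]
  have ae: "AE x in M. (\<integral>\<^sup>+y. ennreal ((f y - (\<integral>y. f y \<partial>T x))\<^sup>2) \<partial>T x)
     = ennreal ((\<integral>y. (f y)\<^sup>2 \<partial>T x) - (\<integral>y. f y \<partial>T x)\<^sup>2)
     \<and> (\<integral>y. f y \<partial>T x)\<^sup>2 \<le> (\<integral>y. (f y)\<^sup>2 \<partial>T x)"
    using AE_L2[OF f f2]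
  proof (rule AE_mp, intro AE_I2 impI)
    fix x assume x: "x \<in> space M" and i: "integrable (T x) f \<and> integrable (T x) (\<lambda>y. (f y)\<^sup>2)"
    interpret p: prob_space "T x" using T_prob[OF x] .
    define E where "E = (\<integral>y. f y \<partial>T x)"
    have i2: "integrable (T x) (\<lambda>y. (f y - E)\<^sup>2)"
      using i by (simp add: power2_diff)
    have "(\<integral>y. (f y - E)\<^sup>2 \<partial>T x) = (\<integral>y. (f y)\<^sup>2 \<partial>T x) - E\<^sup>2"
      unfolding E_def using p.variance_eq[of f] i by simp
    moreover have "(\<integral>\<^sup>+y. ennreal ((f y - E)\<^sup>2) \<partial>T x) = ennreal (\<integral>y. (f y - E)\<^sup>2 \<partial>T x)"
      by (rule nn_integral_eq_integral[OF i2]) simp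
    ultimately show "(\<integral>\<^sup>+y. ennreal ((f y - (\<integral>y. f y \<partial>T x))\<^sup>2) \<partial>T x)
     = ennreal ((\<integral>y. (f y)\<^sup>2 \<partial>T x) - (\<integral>y. f y \<partial>T x)\<^sup>2)
     \<and> (\<integral>y. f y \<partial>T x)\<^sup>2 \<le> (\<integral>y. (f y)\<^sup>2 \<partial>T x)"
      using prob_sq_le[OF T_prob[OF x]] i by (simp add: E_def)
  qed
  have "(\<integral>\<^sup>+x. (\<integral>\<^sup>+y. ennreal ((f y - (\<integral>y. f y \<partial>T x))\<^sup>2) \<partial>T x) \<partial>M)
      = (\<integral>\<^sup>+x. ennreal ((\<integral>y. (f y)\<^sup>2 \<partial>T x) - (\<integral>y. f y \<partial>T x)\<^sup>2) \<partial>M)"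
    by (rule nn_integral_cong_AE) (use ae in auto)
  also have "\<dots> = ennreal (\<integral>x. (\<integral>y. (f y)\<^sup>2 \<partial>T x) - (\<integral>y. f y \<partial>T x)\<^sup>2 \<partial>M)"
    by (rule nn_integral_eq_integral) (use ih L(1) ae in auto)
  also have "(\<integral>x. (\<integral>y. (f y)\<^sup>2 \<partial>T x) - (\<integral>y. f y \<partial>T x)\<^sup>2 \<partial>M)
     = (\<integral>x. (f x)\<^sup>2 \<partial>M) - (\<integral>x. (\<integral>y. f y \<partial>T x)\<^sup>2 \<partial>M)"
    using ih L(1) eq by simp
  finally show ?thesis .
qed

lemma dec_bound:
  fixes f :: "'a \<Rightarrow> real"
  assumes f: "f \<in> borel_measurable M" and f2: "integrable M (\<lambda>x. (f x)\<^sup>2)"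
  shows "(\<integral>x. (\<integral>y. f y \<partial>T x)\<^sup>2 \<partial>M) \<le>
     (opnorm M T)\<^sup>2 * ((\<integral>x. (f x)\<^sup>2 \<partial>M) - (\<integral>x. f x \<partial>M)\<^sup>2) + (\<integral>x. f x \<partial>M)\<^sup>2"
proof -
  interpret p: prob_space M using ps .
  define m where "m = (\<integral>x. f x \<partial>M)"
  define h where "h x = f x - m" for x
  have fi: "integrable M f" by (rule p.square_integrable_imp_integrable[OF f]) (use f2 in \<open>simp add: power2_eq_square\<close>)
  have hm: "h \<in> borel_measurable M" unfolding h_def using f by measurable
  have h2: "integrable M (\<lambda>x. (h x)\<^sup>2)" unfolding h_def using f2 fi by (simp add: power2_diff)
  have h0: "(\<integral>x. h x \<partial>M) = 0" unfolding h_def using fi by (simp add: m_def p.prob_space)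
  have hsq: "(\<integral>x. (h x)\<^sup>2 \<partial>M) = (\<integral>x. (f x)\<^sup>2 \<partial>M) - m\<^sup>2"
    unfolding h_def m_def using p.variance_eq[of f] fi f2 by simp
  have hi: "integrable M h" unfolding h_def using fi by simp
  have ae: "AE x in M. (\<integral>y. f y \<partial>T x) = (\<integral>y. h y \<partial>T x) + m"
    using AE_L2[OF f f2]
  proof (rule AE_mp, intro AE_I2 impI)
    fix x assume x: "x \<in> space M" and i: "integrable (T x) f \<and> integrable (T x) (\<lambda>y. (f y)\<^sup>2)"
    interpret q: prob_space "T x" using T_prob[OF x] .
    show "(\<integral>y. f y \<partial>T x) = (\<integral>y. h y \<partial>T x) + m" unfolding h_def using i by (simp add: q.prob_space)
  qed
  note Lh = L2_contr[OF hm h2]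
  have Thi: "integrable M (\<lambda>x. \<integral>y. h y \<partial>T x)" using integral_inv(1)[OF hi] .
  have Th0: "(\<integral>x. (\<integral>y. h y \<partial>T x) \<partial>M) = 0" using integral_inv(2)[OF hi] h0 by simp
  have "(\<integral>x. (\<integral>y. f y \<partial>T x)\<^sup>2 \<partial>M) = (\<integral>x. ((\<integral>y. h y \<partial>T x) + m)\<^sup>2 \<partial>M)"
  proof (rule integral_cong_AE)
    show "(\<lambda>x. (\<integral>y. f y \<partial>T x)\<^sup>2) \<in> borel_measurable M" using f by measurable
    show "(\<lambda>x. ((\<integral>y. h y \<partial>T x) + m)\<^sup>2) \<in> borel_measurable M" using hm by measurable
  qed (use ae in auto)
  also have "\<dots> = (\<integral>x. (\<integral>y. h y \<partial>T x)\<^sup>2 \<partial>M) + 2 * m * (\<integral>x. (\<integral>y. h y \<partial>T x) \<partial>M) + m\<^sup>2"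
    using Lh(1) Thi by (simp add: power2_sum p.prob_space algebra_simps)
  also have "\<dots> = (\<integral>x. (\<integral>y. h y \<partial>T x)\<^sup>2 \<partial>M) + m\<^sup>2" using Th0 by simp
  also have "\<dots> \<le> (opnorm M T)\<^sup>2 * (\<integral>x. (h x)\<^sup>2 \<partial>M) + m\<^sup>2"
    using opnorm_bound[OF hm h2 h0] by simp
  finally show ?thesis using hsq by (simp add: m_def)
qed

lemma kpow_meas: "kpow M T n \<in> M \<rightarrow>\<^sub>M prob_algebra M"
proof (induction n)
  case 0 then show ?case by simp
next
  case (Suc n)
  show ?case unfolding kpow.simps by (rule measurable_bind_prob_space[OF T Suc])
qed

lemma kpow_inv: "bind M (kpow M T n) = M"
proof (induction n)
  case 0 then show ?case by (simp add: bind_return')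
next
  case (Suc n)
  have "bind M (kpow M T (Suc n)) = bind M (\<lambda>x. bind (T x) (kpow M T n))" by simp
  also have "\<dots> = bind (bind M T) (kpow M T n)"
    by (rule bind_assoc[symmetric, OF T_sub measurable_prob_algebraD[OF kpow_meas]])
  also have "\<dots> = M" using inv Suc by simp
  finally show ?case .
qed

lemma kpow_Suc': "x \<in> space M \<Longrightarrow> kpow M T (Suc n) x = bind (kpow M T n x) T"
proof (induction n arbitrary: x)
  case 0
  have "kpow M T (Suc 0) x = bind (T x) (return M)" by simp
  also have "\<dots> = T x" by (rule bind_return''[OF T_sets[OF 0]])
  also have "\<dots> = bind (return M x) T" by (rule bind_return[OF T_sub 0, symmetric])
  finally show ?case by simp
next
  case (Suc n)
  have "kpow M T (Suc (Suc n)) x = bind (T x) (kpow M T (Suc n))" by simp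
  also have "\<dots> = bind (T x) (\<lambda>y. bind (kpow M T n y) T)"
    by (rule bind_cong[OF refl]) (use Suc.IH T_space[OF Suc.prems] in auto)
  also have "\<dots> = bind (bind (T x) (kpow M T n)) T"
  proof (rule bind_assoc[symmetric])
    show "kpow M T n \<in> T x \<rightarrow>\<^sub>M subprob_algebra M"
      using measurable_prob_algebraD[OF kpow_meas] T_sets[OF Suc.prems]
      by (simp cong: measurable_cong_sets)
  qed (rule T_sub)
  also have "\<dots> = bind (kpow M T (Suc n) x) T" by simp
  finally show ?case .
qed

lemma mk_kpow: "mk M (kpow M T n)"
  using ps kpow_meas kpow_inv by (simp add: mk_def)

end

lemma kpow_cong_sets: assumes "sets M = sets N" shows "kpow M T n = kpow N T n"
proof (induction n)
  case 0 show ?case using return_sets_cong[OF assms] by simp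
next
  case (Suc n) then show ?case by simp
qed




lemma measure_of_sigma_sets:
  assumes "A \<subseteq> Pow \<Omega>"
  shows "measure_of \<Omega> (sigma_sets \<Omega> A) \<mu> = measure_of \<Omega> A \<mu>"
proof -
  have "sigma_sets \<Omega> A \<subseteq> Pow \<Omega>" using sigma_sets_into_sp[OF assms] by auto
  then show ?thesis unfolding measure_of_def using sigma_sets_sigma_sets_eq[OF assms] assms by simp
qed

lemma sq_int_imp_int:
  fixes f :: "'a \<Rightarrow> real"
  assumes "prob_space N" "f \<in> borel_measurable N" "integrable N (\<lambda>x. (f x)\<^sup>2)"
  shows "integrable N f"
proof -
  interpret prob_space N by fact
  show ?thesis by (rule square_integrable_imp_integrable[OF assms(2)]) (use assms(3) in simp)
qed

lemma ennreal_inv_mult_self: "(t::ennreal) \<noteq> 0 \<Longrightarrow> t < \<top> \<Longrightarrow> inverse t * t = 1"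
  by (metis Groups.mult_ac(2) divide_ennreal_def ennreal_divide_self)

locale blk =
  fixes K :: "'k set" and Psi :: "'k \<Rightarrow> 'z measure"
  assumes K: "countable K" "K \<noteq> {}"
    and Psi_pos: "\<And>k. k \<in> K \<Longrightarrow> emeasure (Psi k) (space (Psi k)) \<noteq> 0"
    and Psi_fin: "\<And>k. k \<in> K \<Longrightarrow> emeasure (Psi k) (space (Psi k)) < \<infinity>"
    and tot_fin: "total_mass K Psi < \<infinity>"
begin

abbreviation "PX \<equiv> PiX K Psi"
definition "tm = total_mass K Psi"
definition "u k = emeasure (Psi k) (space (Psi k))"

lemma Z_ne: "k \<in> K \<Longrightarrow> space (Psi k) \<noteq> {}"
  using Psi_pos by force

lemma gen_sub: "Xgen K Psi \<subseteq> Pow (Xspace K Psi)"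
  unfolding Xgen_def Xspace_def using sets.sets_into_space by fastforce

lemma sets_Pi: "sets PX = sigma_sets (Xspace K Psi) (Xgen K Psi)"
  unfolding PiX_def using gen_sub by (rule sets_measure_of)

lemma space_Pi: "space PX = Xspace K Psi"
  unfolding PiX_def using gen_sub by (rule space_measure_of)

lemma gen_in_sets: "k \<in> K \<Longrightarrow> A \<in> sets (Psi k) \<Longrightarrow> {k} \<times> A \<in> sets PX"
  unfolding sets_Pi Xgen_def by (rule sigma_sets.Basic) blast

lemma block_sets: "k \<in> K \<Longrightarrow> {k} \<times> space (Psi k) \<in> sets PX"
  by (rule gen_in_sets) auto

lemma meas_Pair[measurable]: "k \<in> K \<Longrightarrow> Pair k \<in> Psi k \<rightarrow>\<^sub>M PX"
  unfolding PiX_def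
proof (rule measurable_measure_of[OF gen_sub])
  assume k: "k \<in> K"
  show "Pair k \<in> space (Psi k) \<rightarrow> Xspace K Psi" using k by (auto simp: Xspace_def)
  fix y assume "y \<in> Xgen K Psi"
  then obtain k' A where y: "y = {k'} \<times> A" "k' \<in> K" "A \<in> sets (Psi k')" unfolding Xgen_def by blast
  show "Pair k -` y \<inter> space (Psi k) \<in> sets (Psi k)"
  proof (cases "k' = k")
    case True
    then have "Pair k -` y \<inter> space (Psi k) = A" using y sets.sets_into_space by auto
    then show ?thesis using y True by simp
  next
    case False
    then have "Pair k -` y \<inter> space (Psi k) = {}" using y by auto
    then show ?thesis by simp
  qed
qed

lemma meas_fst[measurable]: "fst \<in> PX \<rightarrow>\<^sub>M count_space K"
proof -
  have "fst \<in> PX \<rightarrow>\<^sub>M count_space K"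
    unfolding measurable_def
  proof (intro CollectI conjI ballI)
    show "fst \<in> space PX \<rightarrow> space (count_space K)" by (auto simp: space_Pi Xspace_def)
    fix S assume "S \<in> sets (count_space K)"
    then have S: "S \<subseteq> K" by simp
    have "fst -` S \<inter> space PX = (\<Union>k\<in>S. {k} \<times> space (Psi k))" using S by (auto simp: space_Pi Xspace_def)
    also have "\<dots> \<in> sets PX"
      using S countable_subset[OF S K(1)] by (intro sets.countable_UN') (auto intro!: block_sets)
    finally show "fst -` S \<inter> space PX \<in> sets PX" .
  qed
  then show ?thesis .
qed

lemma Xspace_in: "Xspace K Psi \<in> sets PX" using sets.top[of PX] space_Pi by simp

lemma meas_sec[measurable]: "k \<in> K \<Longrightarrow> f \<in> borel_measurable PX \<Longrightarrow> (\<lambda>z. f (k, z)) \<in> borel_measurable (Psi k)"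
  using measurable_compose[OF meas_Pair] by blast

lemma pre_space: "k \<in> K \<Longrightarrow> Pair k -` Xspace K Psi \<inter> space (Psi k) = space (Psi k)"
  by (auto simp: Xspace_def)

lemma meas_Pair_sc: "k \<in> K \<Longrightarrow> Pair k \<in> scale_measure r (Psi k) \<rightarrow>\<^sub>M PX"
  using meas_Pair by (simp cong: measurable_cong_sets)

lemma u_le_tm: "k \<in> K \<Longrightarrow> u k \<le> tm"
proof -
  assume k: "k \<in> K"
  have "u k = (\<integral>\<^sup>+ k'. u k' * indicator {k} k' \<partial>count_space K)"
    using k by (simp add: nn_integral_count_space_indicator nn_integral_indicator_singleton)
  also have "\<dots> \<le> (\<integral>\<^sup>+ k'. u k' \<partial>count_space K)"
    by (intro nn_integral_mono) (auto simp: indicator_def)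
  finally show ?thesis by (simp add: tm_def total_mass_def u_def)
qed

lemma tm_pos: "tm \<noteq> 0"
proof -
  obtain k where "k \<in> K" using K(2) by blast
  then show ?thesis using u_le_tm Psi_pos by (auto simp: u_def)
qed

lemma tm_fin: "tm < \<infinity>" using tot_fin by (simp add: tm_def)

definition "Nk k = distr (scale_measure (inverse tm) (Psi k)) PX (Pair k)"

lemma Nk_meas: "Nk \<in> count_space K \<rightarrow>\<^sub>M subprob_algebra PX"
proof (rule measurable_count_space_eq1[THEN iffD2], rule Pi_I)
  fix k assume k: "k \<in> K"
  have sets: "sets (Nk k) = sets PX" by (simp add: Nk_def)
  have "emeasure (Nk k) (space (Nk k)) = inverse tm * u k"
    using k by (simp add: Nk_def emeasure_distr[OF meas_Pair_sc] u_def space_Pi pre_space Xspace_in space_scale_measure)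
  also have "\<dots> \<le> inverse tm * tm" using u_le_tm[OF k] by (intro mult_left_mono) auto
  also have "\<dots> = 1" using tm_pos tm_fin by (simp add: ennreal_inv_mult_self)
  finally have "subprob_space (Nk k)"
    using Z_ne[OF k] k by (intro subprob_spaceI) (auto simp: Nk_def space_Pi Xspace_def)
  then show "Nk k \<in> space (subprob_algebra PX)" using sets by (simp add: space_subprob_algebra)
qed

definition "R = bind (count_space K) Nk"

lemma emeasure_R: "B \<in> sets PX \<Longrightarrow> emeasure R B =
  (\<integral>\<^sup>+ k. emeasure (Psi k) (Pair k -` B \<inter> space (Psi k)) \<partial>count_space K) / tm"
proof -
  assume B: "B \<in> sets PX"
  have "emeasure R B = (\<integral>\<^sup>+ k. emeasure (Nk k) B \<partial>count_space K)"
    unfolding R_def using K(2) by (intro emeasure_bind[OF _ Nk_meas B]) auto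
  also have "\<dots> = (\<integral>\<^sup>+ k. inverse tm * emeasure (Psi k) (Pair k -` B \<inter> space (Psi k)) \<partial>count_space K)"
    by (intro nn_integral_cong) (simp add: Nk_def emeasure_distr[OF meas_Pair_sc] B space_scale_measure)
  also have "\<dots> = inverse tm * (\<integral>\<^sup>+ k. emeasure (Psi k) (Pair k -` B \<inter> space (Psi k)) \<partial>count_space K)"
    by (rule nn_integral_cmult) simp
  finally show ?thesis by (simp add: divide_ennreal_def mult.commute)
qed

lemma sets_R: "sets R = sets PX"
  unfolding R_def using K(2) by (intro sets_bind) (auto simp: Nk_def)

lemma space_R: "space R = space PX"
  using sets_R by (rule sets_eq_imp_space_eq)

lemma Pi_eq_R: "PX = R"
proof -
  have "PX = measure_of (Xspace K Psi) (Xgen K Psi) (emeasure R)"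
    unfolding PiX_def
  proof (rule measure_of_eq[OF gen_sub])
    fix a assume "a \<in> sigma_sets (Xspace K Psi) (Xgen K Psi)"
    then have "a \<in> sets PX" by (simp add: sets_Pi)
    then show "(\<integral>\<^sup>+ k. emeasure (Psi k) (Pair k -` a \<inter> space (Psi k)) \<partial>count_space K) / total_mass K Psi
          = emeasure R a" by (simp add: emeasure_R tm_def)
  qed
  also have "\<dots> = measure_of (space R) (sets R) (emeasure R)"
    using measure_of_sigma_sets[OF gen_sub] by (simp add: space_R sets_R sets_Pi space_Pi)
  also have "\<dots> = R" by (rule measure_of_of_measure)
  finally show ?thesis .
qed

lemma nn_integral_Pi:
  assumes f: "f \<in> borel_measurable PX"
  shows "(\<integral>\<^sup>+x. f x \<partial>PX) = (\<integral>\<^sup>+k. inverse tm * (\<integral>\<^sup>+z. f (k, z) \<partial>Psi k) \<partial>count_space K)"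
proof -
  have "(\<integral>\<^sup>+x. f x \<partial>PX) = (\<integral>\<^sup>+x. f x \<partial>R)" using Pi_eq_R by simp
  also have "\<dots> = (\<integral>\<^sup>+k. \<integral>\<^sup>+x. f x \<partial>Nk k \<partial>count_space K)"
    unfolding R_def by (rule nn_integral_bind[OF f Nk_meas])
  also have "\<dots> = (\<integral>\<^sup>+k. inverse tm * (\<integral>\<^sup>+z. f (k, z) \<partial>Psi k) \<partial>count_space K)"
  proof (rule nn_integral_cong)
    fix k assume "k \<in> space (count_space K)"
    then have k: "k \<in> K" by simp
    have "(\<integral>\<^sup>+x. f x \<partial>Nk k) = (\<integral>\<^sup>+z. f (k, z) \<partial>scale_measure (inverse tm) (Psi k))"
      unfolding Nk_def using k f by (intro nn_integral_distr) (auto cong: measurable_cong_sets)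
    also have "\<dots> = inverse tm * (\<integral>\<^sup>+z. f (k, z) \<partial>Psi k)"
      using k f by (intro nn_integral_scale_measure) measurable
    finally show "(\<integral>\<^sup>+x. f x \<partial>Nk k) = inverse tm * (\<integral>\<^sup>+z. f (k, z) \<partial>Psi k)" .
  qed
  finally show ?thesis .
qed

lemma emeasure_Pi_block: "k \<in> K \<Longrightarrow> emeasure PX ({k} \<times> space (Psi k)) = u k / tm"
proof -
  assume k: "k \<in> K"
  have "emeasure PX ({k} \<times> space (Psi k)) = emeasure R ({k} \<times> space (Psi k))" using Pi_eq_R by simp
  also have "\<dots> = (\<integral>\<^sup>+ k'. u k * indicator {k} k' \<partial>count_space K) / tm"
    using k block_sets[OF k]
    by (subst emeasure_R) (auto intro!: arg_cong2[where f="(/)"] nn_integral_cong simp: u_def indicator_def)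
  also have "\<dots> = u k / tm" using k by (simp add: nn_integral_count_space_indicator nn_integral_indicator_singleton)
  finally show ?thesis .
qed

lemma prob_Pi: "prob_space PX"
proof
  have "emeasure PX (space PX) = emeasure R (space PX)" using Pi_eq_R by simp
  also have "\<dots> = (\<integral>\<^sup>+ k. u k \<partial>count_space K) / tm"
    by (subst emeasure_R) (auto intro!: arg_cong2[where f="(/)"] nn_integral_cong simp: u_def space_Pi pre_space Xspace_in)
  also have "\<dots> = 1" using tm_pos tm_fin by (simp add: tm_def total_mass_def u_def[abs_def] divide_eq_1_ennreal)
  finally show "emeasure PX (space PX) = 1" .
qed

definition "Phi k = normalise (Psi k)"
definition "w k = enn2real (u k / tm)"

lemma u_fin: "k \<in> K \<Longrightarrow> u k < \<infinity>" using Psi_fin by (simp add: u_def)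
lemma u_pos: "k \<in> K \<Longrightarrow> u k \<noteq> 0" using Psi_pos by (simp add: u_def)

lemma w_eq: "k \<in> K \<Longrightarrow> ennreal (w k) = u k / tm"
proof -
  assume k: "k \<in> K"
  have "u k / tm \<noteq> \<top>" using u_fin[OF k] tm_pos by (auto simp: ennreal_divide_eq_top_iff)
  then show ?thesis by (simp add: w_def less_top)
qed

lemma w_pos: "k \<in> K \<Longrightarrow> 0 < w k"
proof -
  assume k: "k \<in> K"
  have "u k / tm \<noteq> 0" using u_pos[OF k] tm_fin by (simp add: ennreal_divide_eq_0_iff)
  moreover have "u k / tm \<noteq> \<top>" using u_fin[OF k] tm_pos by (auto simp: ennreal_divide_eq_top_iff)
  ultimately show ?thesis unfolding w_def by (simp add: enn2real_positive_iff less_top[symmetric] zero_less_iff_neq_zero)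
qed

lemma sets_Phi[simp, measurable_cong]: "sets (Phi k) = sets (Psi k)"
  by (simp add: Phi_def normalise_def)

lemma space_Phi[simp]: "space (Phi k) = space (Psi k)"
  by (simp add: Phi_def normalise_def space_scale_measure)

lemma prob_Phi: "k \<in> K \<Longrightarrow> prob_space (Phi k)"
proof
  assume k: "k \<in> K"
  show "emeasure (Phi k) (space (Phi k)) = 1"
    using u_pos[OF k] u_fin[OF k]
    by (simp add: Phi_def normalise_def space_scale_measure u_def[symmetric] ennreal_inv_mult_self)
qed

lemma Phi_meas1: "k \<in> K \<Longrightarrow> measure (Phi k) (space (Psi k)) = 1"
  using prob_space.prob_space[OF prob_Phi] by simp

lemma nn_Phi: "f \<in> borel_measurable (Psi k) \<Longrightarrow>
  (\<integral>\<^sup>+z. f z \<partial>Phi k) = inverse (u k) * (\<integral>\<^sup>+z. f z \<partial>Psi k)"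
  by (simp add: Phi_def normalise_def nn_integral_scale_measure u_def)

lemma nn_Pi2:
  assumes f: "f \<in> borel_measurable PX"
  shows "(\<integral>\<^sup>+x. f x \<partial>PX) = (\<integral>\<^sup>+k. ennreal (w k) * (\<integral>\<^sup>+z. f (k, z) \<partial>Phi k) \<partial>count_space K)"
  unfolding nn_integral_Pi[OF f]
proof (rule nn_integral_cong)
  fix k assume "k \<in> space (count_space K)"
  then have k: "k \<in> K" by simp
  have "ennreal (w k) * (\<integral>\<^sup>+z. f (k, z) \<partial>Phi k) = u k / tm * (inverse (u k) * (\<integral>\<^sup>+z. f (k, z) \<partial>Psi k))"
    using k f by (simp add: w_eq nn_Phi)
  also have "\<dots> = inverse tm * (u k * inverse (u k)) * (\<integral>\<^sup>+z. f (k, z) \<partial>Psi k)"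
    by (simp add: divide_ennreal_def ac_simps)
  also have "\<dots> = inverse tm * (\<integral>\<^sup>+z. f (k, z) \<partial>Psi k)"
  proof -
    have "u k * inverse (u k) = 1" using u_pos[OF k] u_fin[OF k] ennreal_inv_mult_self by (simp add: mult.commute)
    then show ?thesis by simp
  qed
  finally show "inverse tm * (\<integral>\<^sup>+z. f (k, z) \<partial>Psi k) = ennreal (w k) * (\<integral>\<^sup>+z. f (k, z) \<partial>Phi k)" ..
qed

lemma nn_count_ge: "k \<in> K \<Longrightarrow> g k \<le> (\<integral>\<^sup>+k'. g k' \<partial>count_space K)"
proof -
  assume k: "k \<in> K"
  have "g k = (\<integral>\<^sup>+ k'. g k' * indicator {k} k' \<partial>count_space K)"
    using k by (simp add: nn_integral_count_space_indicator nn_integral_indicator_singleton)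
  also have "\<dots> \<le> (\<integral>\<^sup>+ k'. g k' \<partial>count_space K)"
    by (intro nn_integral_mono) (auto simp: indicator_def)
  finally show ?thesis .
qed

lemma int_sec:
  fixes F :: "'k \<times> 'z \<Rightarrow> real"
  assumes F: "integrable PX F" and k: "k \<in> K"
  shows "integrable (Phi k) (\<lambda>z. F (k, z))"
proof -
  have Fm: "F \<in> borel_measurable PX" using F by auto
  have "ennreal (w k) * (\<integral>\<^sup>+z. ennreal (norm (F (k, z))) \<partial>Phi k)
      \<le> (\<integral>\<^sup>+k. ennreal (w k) * (\<integral>\<^sup>+z. ennreal (norm (F (k, z))) \<partial>Phi k) \<partial>count_space K)"
    by (rule nn_count_ge[OF k])
  also have "\<dots> = (\<integral>\<^sup>+x. ennreal (norm (F x)) \<partial>PX)" by (rule nn_Pi2[symmetric]) (use Fm in measurable)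
  also have "\<dots> < \<infinity>" using F by (simp add: integrable_iff_bounded)
  finally have "(\<integral>\<^sup>+z. ennreal (norm (F (k, z))) \<partial>Phi k) < \<infinity>"
    using w_pos[OF k] by (auto simp: ennreal_mult_less_top)
  moreover have "(\<lambda>z. F (k, z)) \<in> borel_measurable (Phi k)" using Fm k by (simp cong: measurable_cong_sets)
  ultimately show ?thesis by (simp add: integrable_iff_bounded)
qed

lemma int_Pi_nonneg:
  fixes G :: "'k \<times> 'z \<Rightarrow> real"
  assumes G: "integrable PX G" and nn: "\<And>x. 0 \<le> G x"
  shows "integrable (count_space K) (\<lambda>k. w k * (\<integral>z. G (k, z) \<partial>Phi k))"
    "(\<integral>x. G x \<partial>PX) = (\<integral>k. w k * (\<integral>z. G (k, z) \<partial>Phi k) \<partial>count_space K)"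
proof -
  have Gm: "G \<in> borel_measurable PX" using G by auto
  have eq: "(\<integral>\<^sup>+x. ennreal (G x) \<partial>PX) = (\<integral>\<^sup>+k. ennreal (w k * (\<integral>z. G (k, z) \<partial>Phi k)) \<partial>count_space K)"
    unfolding nn_Pi2[OF measurable_compose[OF Gm measurable_ennreal]]
  proof (rule nn_integral_cong)
    fix k assume "k \<in> space (count_space K)"
    then have k: "k \<in> K" by simp
    have "(\<integral>\<^sup>+z. ennreal (G (k, z)) \<partial>Phi k) = ennreal (\<integral>z. G (k, z) \<partial>Phi k)"
      by (rule nn_integral_eq_integral[OF int_sec[OF G k]]) (use nn in auto)
    moreover have "0 \<le> (\<integral>z. G (k, z) \<partial>Phi k)" by (intro integral_nonneg_AE AE_I2) (use nn in auto)
    ultimately show "ennreal (w k) * (\<integral>\<^sup>+z. ennreal (G (k, z)) \<partial>Phi k) = ennreal (w k * (\<integral>z. G (k, z) \<partial>Phi k))"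
      using w_pos[OF k] by (simp add: ennreal_mult)
  qed
  have fin: "(\<integral>\<^sup>+x. ennreal (G x) \<partial>PX) < \<infinity>"
  proof -
    have "(\<integral>\<^sup>+x. ennreal (G x) \<partial>PX) = (\<integral>\<^sup>+x. ennreal (norm (G x)) \<partial>PX)"
      by (intro nn_integral_cong) (use nn in auto)
    then show ?thesis using G by (simp add: integrable_iff_bounded)
  qed
  have nnk: "\<And>k. 0 \<le> w k * (\<integral>z. G (k, z) \<partial>Phi k)"
    by (intro mult_nonneg_nonneg integral_nonneg_AE AE_I2) (use nn in \<open>auto simp: w_def\<close>)
  show "integrable (count_space K) (\<lambda>k. w k * (\<integral>z. G (k, z) \<partial>Phi k))"
    using fin eq nnk by (simp add: integrable_iff_bounded)
  have "(\<integral>x. G x \<partial>PX) = enn2real (\<integral>\<^sup>+x. ennreal (G x) \<partial>PX)"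
    by (rule integral_eq_nn_integral) (use Gm nn in auto)
  also have "\<dots> = (\<integral>k. w k * (\<integral>z. G (k, z) \<partial>Phi k) \<partial>count_space K)"
    unfolding eq by (rule integral_eq_nn_integral[symmetric]) (use nnk in auto)
  finally show "(\<integral>x. G x \<partial>PX) = (\<integral>k. w k * (\<integral>z. G (k, z) \<partial>Phi k) \<partial>count_space K)" .
qed

lemma int_Pi:
  fixes F :: "'k \<times> 'z \<Rightarrow> real"
  assumes F: "integrable PX F"
  shows "integrable (count_space K) (\<lambda>k. w k * (\<integral>z. F (k, z) \<partial>Phi k))"
    "(\<integral>x. F x \<partial>PX) = (\<integral>k. w k * (\<integral>z. F (k, z) \<partial>Phi k) \<partial>count_space K)"
proof -
  define Fp where "Fp x = max (F x) 0" for x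
  define Fn where "Fn x = max (- F x) 0" for x
  have ip: "integrable PX Fp" unfolding Fp_def using F by auto
  have inn: "integrable PX Fn" unfolding Fn_def using F by auto
  have Fe: "F = (\<lambda>x. Fp x - Fn x)" unfolding Fp_def Fn_def by (auto simp: fun_eq_iff)
  note a = int_Pi_nonneg[OF ip] int_Pi_nonneg[OF inn]
  have a1: "integrable (count_space K) (\<lambda>k. w k * (\<integral>z. Fp (k, z) \<partial>Phi k))" using a(1) by (simp add: Fp_def)
  have a2: "integrable (count_space K) (\<lambda>k. w k * (\<integral>z. Fn (k, z) \<partial>Phi k))" using a(3) by (simp add: Fn_def)
  have eqk: "w k * (\<integral>z. F (k, z) \<partial>Phi k) = w k * (\<integral>z. Fp (k, z) \<partial>Phi k) - w k * (\<integral>z. Fn (k, z) \<partial>Phi k)"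
    if k: "k \<in> K" for k
  proof -
    have "integrable (Phi k) (\<lambda>z. Fp (k, z))" "integrable (Phi k) (\<lambda>z. Fn (k, z))"
      using int_sec[OF ip k] int_sec[OF inn k] .
    then show ?thesis by (subst Fe) (simp add: right_diff_distrib)
  qed
  have ii: "integrable (count_space K) (\<lambda>k. w k * (\<integral>z. Fp (k, z) \<partial>Phi k) - w k * (\<integral>z. Fn (k, z) \<partial>Phi k))"
    using a1 a2 by simp
  show "integrable (count_space K) (\<lambda>k. w k * (\<integral>z. F (k, z) \<partial>Phi k))"
    by (rule Bochner_Integration.integrable_cong[THEN iffD2, OF refl _ ii]) (use eqk in simp)
  have "(\<integral>x. F x \<partial>PX) = (\<integral>x. Fp x \<partial>PX) - (\<integral>x. Fn x \<partial>PX)" using ip inn by (subst Fe) simp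
  also have "\<dots> = (\<integral>k. w k * (\<integral>z. Fp (k, z) \<partial>Phi k) - w k * (\<integral>z. Fn (k, z) \<partial>Phi k) \<partial>count_space K)"
    using a a1 a2 by (simp add: Fp_def Fn_def)
  also have "\<dots> = (\<integral>k. w k * (\<integral>z. F (k, z) \<partial>Phi k) \<partial>count_space K)"
    by (rule Bochner_Integration.integral_cong[OF refl]) (use eqk in simp)
  finally show "(\<integral>x. F x \<partial>PX) = (\<integral>k. w k * (\<integral>z. F (k, z) \<partial>Phi k) \<partial>count_space K)" .
qed

lemma abs_prod_le_sum_sq: "\<bar>(a::real) * b\<bar> \<le> (a\<^sup>2 + b\<^sup>2) / 2"
proof -
  have "0 \<le> (\<bar>a\<bar> - \<bar>b\<bar>)\<^sup>2" by simp
  then show ?thesis by (simp add: power2_diff abs_mult power2_abs)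
qed

lemma meas_glue:
  fixes h :: "'k \<Rightarrow> 'z \<Rightarrow> 'b::topological_space"
  assumes h: "\<And>k. k \<in> K \<Longrightarrow> h k \<in> borel_measurable (Psi k)"
  shows "(\<lambda>x. h (fst x) (snd x)) \<in> borel_measurable PX"
proof (rule borel_measurableI)
  fix S :: "'b set" assume S: "open S"
  have "(\<lambda>x. h (fst x) (snd x)) -` S \<inter> space PX = (\<Union>k\<in>K. {k} \<times> (h k -` S \<inter> space (Psi k)))"
    by (auto simp: space_Pi Xspace_def)
  also have "\<dots> \<in> sets PX"
  proof -
    have hs: "\<And>k. k \<in> K \<Longrightarrow> h k -` S \<inter> space (Psi k) \<in> sets (Psi k)"
      using measurable_sets[OF h borel_open[OF S]] by blast
    show ?thesis using K(1) hs by (intro sets.countable_UN') (auto intro!: gen_in_sets)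
  qed
  finally show "(\<lambda>x. h (fst x) (snd x)) -` S \<inter> space PX \<in> sets PX" .
qed

definition "mean f k = (\<integral>z. f (k, z) \<partial>Phi k)"
definition "gm f x = mean f (fst x)"

lemma gm_meas[measurable]: "gm f \<in> borel_measurable PX"
  unfolding gm_def by (rule measurable_compose[OF meas_fst borel_measurable_count_space])

context
  fixes f :: "'k \<times> 'z \<Rightarrow> real"
  assumes fm: "f \<in> borel_measurable PX" and f2: "integrable PX (\<lambda>x. (f x)\<^sup>2)"
begin

lemma sec_L2: "k \<in> K \<Longrightarrow> integrable (Phi k) (\<lambda>z. (f (k, z))\<^sup>2)"
  using int_sec[OF f2] by simp

lemma sec_meas: "k \<in> K \<Longrightarrow> (\<lambda>z. f (k, z)) \<in> borel_measurable (Phi k)"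
  using fm by (simp cong: measurable_cong_sets)

lemma sec_L1: "k \<in> K \<Longrightarrow> integrable (Phi k) (\<lambda>z. f (k, z))"
  using sq_int_imp_int[OF prob_Phi sec_meas sec_L2] .

lemma f_L1: "integrable PX f"
  using sq_int_imp_int[OF prob_Pi fm f2] .

lemma mean_sq_le: "k \<in> K \<Longrightarrow> (mean f k)\<^sup>2 \<le> (\<integral>z. (f (k, z))\<^sup>2 \<partial>Phi k)"
  unfolding mean_def by (rule prob_sq_le[OF prob_Phi sec_L1 sec_L2])

lemma gm_L2: "integrable PX (\<lambda>x. (gm f x)\<^sup>2)"
proof -
  have [measurable]: "(\<lambda>x. mean f (fst x)) \<in> borel_measurable PX"
    by (rule measurable_compose[OF meas_fst borel_measurable_count_space])
  have "(\<integral>\<^sup>+x. ennreal ((gm f x)\<^sup>2) \<partial>PX) = (\<integral>\<^sup>+k. ennreal (w k) * (\<integral>\<^sup>+z. ennreal ((mean f k)\<^sup>2) \<partial>Phi k) \<partial>count_space K)"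
    by (subst nn_Pi2) (auto simp: gm_def)
  also have "\<dots> \<le> (\<integral>\<^sup>+k. ennreal (w k) * (\<integral>\<^sup>+z. ennreal ((f (k, z))\<^sup>2) \<partial>Phi k) \<partial>count_space K)"
  proof (rule nn_integral_mono)
    fix k assume "k \<in> space (count_space K)"
    then have k: "k \<in> K" by simp
    have "(\<integral>\<^sup>+z. ennreal ((mean f k)\<^sup>2) \<partial>Phi k) = ennreal ((mean f k)\<^sup>2)"
      using prob_space.emeasure_space_1[OF prob_Phi[OF k]] by simp
    also have "\<dots> \<le> ennreal (\<integral>z. (f (k, z))\<^sup>2 \<partial>Phi k)" using mean_sq_le[OF k] by simp
    also have "\<dots> = (\<integral>\<^sup>+z. ennreal ((f (k, z))\<^sup>2) \<partial>Phi k)"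
      by (rule nn_integral_eq_integral[symmetric, OF sec_L2[OF k]]) simp
    finally have "(\<integral>\<^sup>+z. ennreal ((mean f k)\<^sup>2) \<partial>Phi k) \<le> (\<integral>\<^sup>+z. ennreal ((f (k, z))\<^sup>2) \<partial>Phi k)" .
    then show "ennreal (w k) * (\<integral>\<^sup>+z. ennreal ((mean f k)\<^sup>2) \<partial>Phi k) \<le> ennreal (w k) * (\<integral>\<^sup>+z. ennreal ((f (k, z))\<^sup>2) \<partial>Phi k)"
      by (rule mult_left_mono) simp
  qed
  also have "\<dots> = (\<integral>\<^sup>+x. ennreal ((f x)\<^sup>2) \<partial>PX)" by (rule nn_Pi2[symmetric]) (use fm in measurable)
  also have "\<dots> < \<infinity>" using f2 by (simp add: integrable_iff_bounded)
  finally show ?thesis by (simp add: integrable_iff_bounded)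
qed

lemma gm_L1: "integrable PX (gm f)"
  using sq_int_imp_int[OF prob_Pi gm_meas gm_L2] .

lemma gm_sq: "(\<integral>x. (gm f x)\<^sup>2 \<partial>PX) = (\<integral>k. w k * (mean f k)\<^sup>2 \<partial>count_space K)"
  unfolding int_Pi(2)[OF gm_L2]
  by (rule Bochner_Integration.integral_cong[OF refl])
     (simp add: gm_def Phi_meas1)

lemma f_int: "(\<integral>x. f x \<partial>PX) = (\<integral>k. w k * mean f k \<partial>count_space K)"
  unfolding int_Pi(2)[OF f_L1] mean_def ..

lemma gm_int: "(\<integral>x. gm f x \<partial>PX) = (\<integral>x. f x \<partial>PX)"
  unfolding int_Pi(2)[OF gm_L1] f_int
  by (rule Bochner_Integration.integral_cong[OF refl])
     (simp add: gm_def Phi_meas1)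

lemma cross_L1: "integrable PX (\<lambda>x. f x * gm f x)"
proof (rule Bochner_Integration.integrable_bound[OF Bochner_Integration.integrable_add[OF f2 gm_L2]])
  show "(\<lambda>x. f x * gm f x) \<in> borel_measurable PX" using fm by measurable
  show "AE x in PX. norm (f x * gm f x) \<le> norm ((f x)\<^sup>2 + (gm f x)\<^sup>2)"
  proof (intro AE_I2)
    fix x
    have "\<bar>f x * gm f x\<bar> \<le> (f x)\<^sup>2 + (gm f x)\<^sup>2"
      using abs_prod_le_sum_sq[of "f x" "gm f x"] by (rule order_trans) simp
    then show "norm (f x * gm f x) \<le> norm ((f x)\<^sup>2 + (gm f x)\<^sup>2)" by simp
  qed
qed

lemma cross_int: "(\<integral>x. f x * gm f x \<partial>PX) = (\<integral>x. (gm f x)\<^sup>2 \<partial>PX)"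
  unfolding int_Pi(2)[OF cross_L1] gm_sq
proof (rule Bochner_Integration.integral_cong[OF refl])
  fix k assume "k \<in> space (count_space K)"
  then have k: "k \<in> K" by simp
  have "(\<integral>z. f (k, z) * gm f (k, z) \<partial>Phi k) = (\<integral>z. f (k, z) \<partial>Phi k) * mean f k"
    by (simp add: gm_def)
  then show "w k * (\<integral>z. f (k, z) * gm f (k, z) \<partial>Phi k) = w k * (mean f k)\<^sup>2"
    by (simp add: mean_def power2_eq_square)
qed

lemma within_eq: "(\<lambda>x. (f x - gm f x)\<^sup>2) = (\<lambda>x. (f x)\<^sup>2 + (gm f x)\<^sup>2 - 2 * (f x * gm f x))"
  by (auto simp: fun_eq_iff power2_diff)

lemma within_L1: "integrable PX (\<lambda>x. (f x - gm f x)\<^sup>2)"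
  unfolding within_eq using f2 gm_L2 cross_L1 by simp

lemma within_int: "(\<integral>x. (f x - gm f x)\<^sup>2 \<partial>PX) = (\<integral>x. (f x)\<^sup>2 \<partial>PX) - (\<integral>x. (gm f x)\<^sup>2 \<partial>PX)"
  unfolding within_eq using f2 gm_L2 cross_L1 cross_int by simp

end

end



lemma prob_algebra_cong: assumes "sets M = sets N" shows "prob_algebra M = prob_algebra N"
  unfolding prob_algebra_def subprob_algebra_cong[OF assms] ..

lemma var_min:
  fixes g :: "'a \<Rightarrow> real"
  assumes N: "prob_space N" and g: "g \<in> borel_measurable N"
  shows "(\<integral>\<^sup>+y. ennreal ((g y - (\<integral>y. g y \<partial>N))\<^sup>2) \<partial>N) \<le> (\<integral>\<^sup>+y. ennreal ((g y - C)\<^sup>2) \<partial>N)"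
proof (cases "(\<integral>\<^sup>+y. ennreal ((g y - C)\<^sup>2) \<partial>N) = \<infinity>")
  case True then show ?thesis by simp
next
  case False
  interpret prob_space N by fact
  have i1: "integrable N (\<lambda>y. (g y - C)\<^sup>2)"
    using False g by (simp add: integrable_iff_bounded less_top)
  have i2: "integrable N (\<lambda>y. g y - C)"
    by (rule square_integrable_imp_integrable) (use g i1 in auto)
  have gi: "integrable N g" using Bochner_Integration.integrable_add[OF i2, of "\<lambda>_. C"] by simp
  have g2: "integrable N (\<lambda>y. (g y)\<^sup>2)"
  proof -
    have "(\<lambda>y. (g y)\<^sup>2) = (\<lambda>y. (g y - C)\<^sup>2 + 2 * C * g y - C\<^sup>2)" by (auto simp: fun_eq_iff power2_diff)
    then show ?thesis using i1 gi by simp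
  qed
  define E where "E = (\<integral>y. g y \<partial>N)"
  have iE: "integrable N (\<lambda>y. (g y - E)\<^sup>2)" using g2 gi by (simp add: power2_diff)
  have "(\<integral>y. (g y - E)\<^sup>2 \<partial>N) = (\<integral>y. (g y)\<^sup>2 \<partial>N) - E\<^sup>2"
    unfolding E_def using variance_eq[of g] gi g2 by simp
  moreover have "(\<integral>y. (g y - C)\<^sup>2 \<partial>N) = (\<integral>y. (g y)\<^sup>2 \<partial>N) - 2 * C * E + C\<^sup>2"
    using gi g2 by (simp add: power2_diff E_def prob_space)
  moreover have "(E - C)\<^sup>2 = E\<^sup>2 - 2 * C * E + C\<^sup>2" by (simp add: power2_diff algebra_simps)
  ultimately have le: "(\<integral>y. (g y - E)\<^sup>2 \<partial>N) \<le> (\<integral>y. (g y - C)\<^sup>2 \<partial>N)"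
    using zero_le_power2[of "E - C"] by linarith
  have "(\<integral>\<^sup>+y. ennreal ((g y - E)\<^sup>2) \<partial>N) = ennreal (\<integral>y. (g y - E)\<^sup>2 \<partial>N)"
    by (rule nn_integral_eq_integral[OF iE]) simp
  also have "\<dots> \<le> ennreal (\<integral>y. (g y - C)\<^sup>2 \<partial>N)" using le by simp
  also have "\<dots> = (\<integral>\<^sup>+y. ennreal ((g y - C)\<^sup>2) \<partial>N)"
    by (rule nn_integral_eq_integral[symmetric, OF i1]) simp
  finally show ?thesis unfolding E_def .
qed

context blk
begin

lemma min_nn:
  assumes mu: "sets \<mu> = sets PX" and k: "k \<in> K" and nu: "sets \<nu> = sets (Psi k)" and r: "0 \<le> r"
    and le: "\<And>B. B \<in> sets PX \<Longrightarrow> ennreal r * emeasure \<nu> (Pair k -` B \<inter> space (Psi k)) \<le> emeasure \<mu> B"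
    and phi: "\<phi> \<in> borel_measurable PX"
  shows "ennreal r * (\<integral>\<^sup>+w. \<phi> (k, w) \<partial>\<nu>) \<le> (\<integral>\<^sup>+y. \<phi> y \<partial>\<mu>)"
proof -
  have pm: "Pair k \<in> \<nu> \<rightarrow>\<^sub>M PX" unfolding measurable_cong_sets[OF nu refl] by (rule meas_Pair[OF k])
  have spn: "space \<nu> = space (Psi k)" using nu by (rule sets_eq_imp_space_eq)
  define \<nu>' where "\<nu>' = scale_measure (ennreal r) (distr \<nu> PX (Pair k))"
  have s': "sets \<nu>' = sets \<mu>" using mu by (simp add: \<nu>'_def)
  have "\<nu>' \<le> \<mu>"
  proof -
    have "\<forall>B\<in>sets \<nu>'. emeasure \<nu>' B \<le> emeasure \<mu> B"
    proof
      fix B assume "B \<in> sets \<nu>'"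
      then have B: "B \<in> sets PX" by (simp add: \<nu>'_def)
      have "emeasure \<nu>' B = ennreal r * emeasure \<nu> (Pair k -` B \<inter> space (Psi k))"
        unfolding \<nu>'_def emeasure_scale_measure emeasure_distr[OF pm B] spn ..
      then show "emeasure \<nu>' B \<le> emeasure \<mu> B" using le[OF B] by simp
    qed
    then show ?thesis using le_measure[OF s'] by blast
  qed
  then have "(\<integral>\<^sup>+y. \<phi> y \<partial>\<nu>') \<le> (\<integral>\<^sup>+y. \<phi> y \<partial>\<mu>)" by (rule nn_integral_mono_measure[OF s'])
  moreover have "(\<integral>\<^sup>+y. \<phi> y \<partial>\<nu>') = ennreal r * (\<integral>\<^sup>+w. \<phi> (k, w) \<partial>\<nu>)"
  proof -
    have pd: "\<phi> \<in> borel_measurable (distr \<nu> PX (Pair k))"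
      using phi measurable_cong_sets[OF sets_distr[of \<nu> PX "Pair k"] refl] by blast
    have "(\<integral>\<^sup>+y. \<phi> y \<partial>\<nu>') = ennreal r * (\<integral>\<^sup>+y. \<phi> y \<partial>distr \<nu> PX (Pair k))"
      unfolding \<nu>'_def by (rule nn_integral_scale_measure[OF pd])
    also have "(\<integral>\<^sup>+y. \<phi> y \<partial>distr \<nu> PX (Pair k)) = (\<integral>\<^sup>+w. \<phi> (k, w) \<partial>\<nu>)"
      by (rule nn_integral_distr[OF pm pd])
    finally show ?thesis .
  qed
  ultimately show ?thesis by simp
qed

end

locale thm5 = blk K Psi for K :: "'k set" and Psi :: "'k \<Rightarrow> 'z measure" +
  fixes P :: "'k \<times> 'z \<Rightarrow> ('k \<times> 'z) measure"
    and Pk :: "'k \<Rightarrow> 'z \<Rightarrow> 'z measure" and c :: "'k \<Rightarrow> real" and t :: nat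
  assumes P_kernel: "P \<in> PiX K Psi \<rightarrow>\<^sub>M prob_algebra (PiX K Psi)"
    and P_inv: "bind (PiX K Psi) P = PiX K Psi"
    and t_pos: "t > 0"
    and Pk_kernel: "\<And>k. k \<in> K \<Longrightarrow> Pk k \<in> Psi k \<rightarrow>\<^sub>M prob_algebra (Psi k)"
    and Pk_inv: "\<And>k. k \<in> K \<Longrightarrow> bind (normalise (Psi k)) (Pk k) = normalise (Psi k)"
    and Pk_gap: "\<And>k. k \<in> K \<Longrightarrow> opnorm (normalise (Psi k)) (kpow (Psi k) (Pk k) t) < 1"
    and c_pos: "\<And>k. k \<in> K \<Longrightarrow> c k > 0"
    and minor: "\<And>k z A. k \<in> K \<Longrightarrow> z \<in> space (Psi k) \<Longrightarrow> A \<in> sets (Psi k) \<Longrightarrow>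
                  measure (P (k, z)) ({k} \<times> A) \<ge> c k * measure (Pk k z) A"
begin

definition "Q = kpow PX P t"
definition "Qk k = kpow (Psi k) (Pk k) t"
definition "a = (INF k\<in>K. c k ^ t)"
definition "b = (SUP k\<in>K. opnorm (normalise (Psi k)) (kpow (Psi k) (Pk k) t))"

lemma mkP: "mk PX P" using prob_Pi P_kernel P_inv by (simp add: mk_def)
lemma mkQ: "mk PX Q" unfolding Q_def by (rule mk.mk_kpow[OF mkP])

lemma mkPk: "k \<in> K \<Longrightarrow> mk (Phi k) (Pk k)"
  unfolding mk_def
proof (intro conjI)
  assume k: "k \<in> K"
  show "prob_space (Phi k)" by (rule prob_Phi[OF k])
  show "Pk k \<in> Phi k \<rightarrow>\<^sub>M prob_algebra (Phi k)"
    using Pk_kernel[OF k] prob_algebra_cong[of "Phi k" "Psi k"] by (simp cong: measurable_cong_sets)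
  show "Phi k \<bind> Pk k = Phi k" using Pk_inv[OF k] by (simp add: Phi_def)
qed

lemma Qk_eq: "Qk k = kpow (Phi k) (Pk k) t"
  unfolding Qk_def by (rule kpow_cong_sets) simp

lemma mkQk: "k \<in> K \<Longrightarrow> mk (Phi k) (Qk k)"
  unfolding Qk_eq by (rule mk.mk_kpow[OF mkPk])

lemma P_prob: "x \<in> space PX \<Longrightarrow> prob_space (P x)" using mk.T_prob[OF mkP] .
lemma P_sets: "x \<in> space PX \<Longrightarrow> sets (P x) = sets PX" using mk.T_sets[OF mkP] .
lemma Pk_prob: "k \<in> K \<Longrightarrow> z \<in> space (Psi k) \<Longrightarrow> prob_space (Pk k z)" using mk.T_prob[OF mkPk] by simp
lemma Pk_sets: "k \<in> K \<Longrightarrow> z \<in> space (Psi k) \<Longrightarrow> sets (Pk k z) = sets (Psi k)" using mk.T_sets[OF mkPk] by simp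

lemma in_space: "k \<in> K \<Longrightarrow> z \<in> space (Psi k) \<Longrightarrow> (k, z) \<in> space PX"
  by (simp add: space_Pi Xspace_def)

lemma c_le1: "k \<in> K \<Longrightarrow> c k \<le> 1"
proof -
  assume k: "k \<in> K"
  obtain z where z: "z \<in> space (Psi k)" using Z_ne[OF k] by blast
  have "c k * measure (Pk k z) (space (Psi k)) \<le> measure (P (k, z)) ({k} \<times> space (Psi k))"
    using minor[OF k z] by simp
  moreover have "measure (Pk k z) (space (Psi k)) = 1"
    using prob_space.prob_space[OF Pk_prob[OF k z]] sets_eq_imp_space_eq[OF Pk_sets[OF k z]] by simp
  moreover have "measure (P (k, z)) ({k} \<times> space (Psi k)) \<le> 1"
    using prob_space.prob_le_1[OF P_prob[OF in_space[OF k z]]] by simp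
  ultimately show ?thesis by simp
qed

lemma minor_e:
  assumes k: "k \<in> K" and z: "z \<in> space (Psi k)" and B: "B \<in> sets PX"
  shows "ennreal (c k) * emeasure (Pk k z) (Pair k -` B \<inter> space (Psi k)) \<le> emeasure (P (k, z)) B"
proof -
  define A where "A = Pair k -` B \<inter> space (Psi k)"
  have A: "A \<in> sets (Psi k)" unfolding A_def using measurable_sets[OF meas_Pair[OF k] B] .
  have sub: "{k} \<times> A \<subseteq> B" unfolding A_def by auto
  have kA: "{k} \<times> A \<in> sets PX" by (rule gen_in_sets[OF k A])
  interpret p: prob_space "P (k, z)" using P_prob[OF in_space[OF k z]] .
  interpret q: prob_space "Pk k z" using Pk_prob[OF k z] .
  have sP: "sets (P (k, z)) = sets PX" using P_sets[OF in_space[OF k z]] .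
  have sQ: "sets (Pk k z) = sets (Psi k)" using Pk_sets[OF k z] .
  have "ennreal (c k) * emeasure (Pk k z) A = ennreal (c k * measure (Pk k z) A)"
    using c_pos[OF k] by (simp add: q.emeasure_eq_measure ennreal_mult)
  also have "\<dots> \<le> ennreal (measure (P (k, z)) ({k} \<times> A))" using minor[OF k z A] by simp
  also have "\<dots> = emeasure (P (k, z)) ({k} \<times> A)" by (simp add: p.emeasure_eq_measure)
  also have "\<dots> \<le> emeasure (P (k, z)) B" using sub kA B sP by (intro emeasure_mono) auto
  finally show ?thesis unfolding A_def .
qed

lemma minor_pow:
  assumes k: "k \<in> K"
  shows "z \<in> space (Psi k) \<Longrightarrow> B \<in> sets PX \<Longrightarrow>
    ennreal (c k ^ n) * emeasure (kpow (Psi k) (Pk k) n z) (Pair k -` B \<inter> space (Psi k))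
      \<le> emeasure (kpow PX P n (k, z)) B"
proof (induction n arbitrary: z B)
  case 0
  have Bk: "Pair k -` B \<inter> space (Psi k) \<in> sets (Psi k)" using measurable_sets[OF meas_Pair[OF k] 0(2)] .
  then show ?case using in_space[OF k 0(1)] 0 by (auto simp: indicator_def)
next
  case (Suc n)
  note z = Suc.prems(1) and B = Suc.prems(2)
  have kpm: "kpow PX P n \<in> PX \<rightarrow>\<^sub>M subprob_algebra PX"
    using measurable_prob_algebraD[OF mk.kpow_meas[OF mkP]] .
  have kpkm: "kpow (Psi k) (Pk k) n \<in> Psi k \<rightarrow>\<^sub>M subprob_algebra (Psi k)"
    using measurable_prob_algebraD[OF mk.kpow_meas[OF mkPk[OF k]]] kpow_cong_sets[of "Phi k" "Psi k"]
    by (simp cong: measurable_cong_sets add: subprob_algebra_cong[of "Phi k" "Psi k"])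
  define Bk where "Bk = Pair k -` B \<inter> space (Psi k)"
  have Bk: "Bk \<in> sets (Psi k)" unfolding Bk_def using measurable_sets[OF meas_Pair[OF k] B] .
  have spP: "space (P (k, z)) \<noteq> {}" using prob_space.not_empty[OF P_prob[OF in_space[OF k z]]] .
  have spPk: "space (Pk k z) \<noteq> {}" using prob_space.not_empty[OF Pk_prob[OF k z]] .
  have PkM: "kpow (Psi k) (Pk k) n \<in> Pk k z \<rightarrow>\<^sub>M subprob_algebra (Psi k)"
    using kpkm Pk_sets[OF k z] by (simp cong: measurable_cong_sets)
  have PM: "kpow PX P n \<in> P (k, z) \<rightarrow>\<^sub>M subprob_algebra PX"
    using kpm P_sets[OF in_space[OF k z]] by (simp cong: measurable_cong_sets)
  have "ennreal (c k ^ Suc n) * emeasure (kpow (Psi k) (Pk k) (Suc n) z) Bk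
      = ennreal (c k) * (\<integral>\<^sup>+w. ennreal (c k ^ n) * emeasure (kpow (Psi k) (Pk k) n w) Bk \<partial>Pk k z)"
    using c_pos[OF k]
    by (simp add: emeasure_bind[OF spPk PkM Bk] nn_integral_cmult[OF measurable_emeasure_kernel[OF PkM Bk]] ennreal_mult mult.assoc)
  also have "\<dots> \<le> ennreal (c k) * (\<integral>\<^sup>+w. emeasure (kpow PX P n (k, w)) B \<partial>Pk k z)"
  proof (intro mult_left_mono nn_integral_mono)
    fix w assume "w \<in> space (Pk k z)"
    then have w: "w \<in> space (Psi k)" using sets_eq_imp_space_eq[OF Pk_sets[OF k z]] by simp
    show "ennreal (c k ^ n) * emeasure (kpow (Psi k) (Pk k) n w) Bk \<le> emeasure (kpow PX P n (k, w)) B"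
      using Suc.IH[OF w B] unfolding Bk_def .
  qed simp
  also have "\<dots> \<le> (\<integral>\<^sup>+y. emeasure (kpow PX P n y) B \<partial>P (k, z))"
  proof (rule min_nn[OF P_sets[OF in_space[OF k z]] k Pk_sets[OF k z]])
    show "0 \<le> c k" using c_pos[OF k] by simp
    show "\<And>B. B \<in> sets PX \<Longrightarrow> ennreal (c k) * emeasure (Pk k z) (Pair k -` B \<inter> space (Psi k)) \<le> emeasure (P (k, z)) B"
      by (rule minor_e[OF k z])
    show "(\<lambda>y. emeasure (kpow PX P n y) B) \<in> borel_measurable PX"
      using measurable_emeasure_kernel[OF kpm B] .
  qed
  also have "\<dots> = emeasure (kpow PX P (Suc n) (k, z)) B"
    by (simp add: emeasure_bind[OF spP PM B])
  finally show ?case unfolding Bk_def .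
qed

lemma opk_eq: "opnorm (normalise (Psi k)) (kpow (Psi k) (Pk k) t) = opnorm (Phi k) (Qk k)"
  by (simp add: Phi_def Qk_def)

lemma ct_nonneg: "k \<in> K \<Longrightarrow> 0 \<le> c k ^ t" using c_pos[of k] by simp

lemma a_le: "k \<in> K \<Longrightarrow> a \<le> c k ^ t"
  unfolding a_def by (rule cINF_lower) (auto intro!: bdd_belowI[where m=0] ct_nonneg)

lemma a_nonneg: "0 \<le> a"
  unfolding a_def using K(2) by (intro cINF_greatest) (auto intro!: ct_nonneg)

lemma a_le1: "a \<le> 1"
proof -
  obtain k where k: "k \<in> K" using K(2) by blast
  have "c k ^ t \<le> 1" using c_le1[OF k] c_pos[OF k] by (simp add: power_le_one)
  then show ?thesis using a_le[OF k] by simp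
qed

lemma opk_le1: "k \<in> K \<Longrightarrow> opnorm (Phi k) (Qk k) \<le> 1" using mk.opnorm_le1[OF mkQk] .
lemma opk_nonneg: "k \<in> K \<Longrightarrow> 0 \<le> opnorm (Phi k) (Qk k)" using mk.opnorm_nonneg[OF mkQk] .

lemma b_ge: "k \<in> K \<Longrightarrow> opnorm (Phi k) (Qk k) \<le> b"
  unfolding b_def opk_eq by (rule cSUP_upper) (auto intro!: bdd_aboveI[where M=1] opk_le1)

lemma b_le1: "b \<le> 1"
  unfolding b_def opk_eq using K(2) by (intro cSUP_least) (auto intro!: opk_le1)

lemma b_nonneg: "0 \<le> b"
proof -
  obtain k where k: "k \<in> K" using K(2) by blast
  then show ?thesis using b_ge[OF k] opk_nonneg[OF k] by simp
qed

lemma Q_sets: "x \<in> space PX \<Longrightarrow> sets (Q x) = sets PX" using mk.T_sets[OF mkQ] .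
lemma Qk_sets: "k \<in> K \<Longrightarrow> z \<in> space (Psi k) \<Longrightarrow> sets (Qk k z) = sets (Psi k)"
  using mk.T_sets[OF mkQk] by simp
lemma Qk_prob: "k \<in> K \<Longrightarrow> z \<in> space (Psi k) \<Longrightarrow> prob_space (Qk k z)"
  using mk.T_prob[OF mkQk] by simp

lemma minor_Q: "k \<in> K \<Longrightarrow> z \<in> space (Psi k) \<Longrightarrow> B \<in> sets PX \<Longrightarrow>
    ennreal (c k ^ t) * emeasure (Qk k z) (Pair k -` B \<inter> space (Psi k)) \<le> emeasure (Q (k, z)) B"
  unfolding Q_def Qk_def by (rule minor_pow)

lemma within_bound:
  fixes f :: "'k \<times> 'z \<Rightarrow> real"
  assumes fm: "f \<in> borel_measurable PX" and f2: "integrable PX (\<lambda>x. (f x)\<^sup>2)"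
  shows "a * (1 - b\<^sup>2) * (\<integral>x. (f x - gm f x)\<^sup>2 \<partial>PX) \<le> (\<integral>x. (f x)\<^sup>2 \<partial>PX) - (\<integral>x. (\<integral>y. f y \<partial>Q x)\<^sup>2 \<partial>PX)"
proof -
  define V where "V x = (\<integral>\<^sup>+y. ennreal ((f y - (\<integral>y. f y \<partial>Q x))\<^sup>2) \<partial>Q x)" for x
  define W where "W k z = (\<integral>\<^sup>+w. ennreal ((f (k, w) - (\<integral>w. f (k, w) \<partial>Qk k z))\<^sup>2) \<partial>Qk k z)" for k z
  have step1: "ennreal (c k ^ t) * W k z \<le> V (k, z)" if k: "k \<in> K" and z: "z \<in> space (Psi k)" for k z
  proof -
    define C where "C = (\<integral>y. f y \<partial>Q (k, z))"
    have gm': "(\<lambda>w. f (k, w)) \<in> borel_measurable (Qk k z)"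
      unfolding measurable_cong_sets[OF Qk_sets[OF k z] refl] by (rule meas_sec[OF k fm])
    have "W k z \<le> (\<integral>\<^sup>+w. ennreal ((f (k, w) - C)\<^sup>2) \<partial>Qk k z)"
      unfolding W_def by (rule var_min[OF Qk_prob[OF k z] gm'])
    then have "ennreal (c k ^ t) * W k z \<le> ennreal (c k ^ t) * (\<integral>\<^sup>+w. ennreal ((f (k, w) - C)\<^sup>2) \<partial>Qk k z)"
      by (rule mult_left_mono) simp
    also have "\<dots> \<le> (\<integral>\<^sup>+y. ennreal ((f y - C)\<^sup>2) \<partial>Q (k, z))"
    proof (rule min_nn[OF Q_sets[OF in_space[OF k z]] k Qk_sets[OF k z]])
      show "0 \<le> c k ^ t" using c_pos[OF k] by simp
      show "\<And>B. B \<in> sets PX \<Longrightarrow> ennreal (c k ^ t) * emeasure (Qk k z) (Pair k -` B \<inter> space (Psi k)) \<le> emeasure (Q (k, z)) B"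
        by (rule minor_Q[OF k z])
      show "(\<lambda>y. ennreal ((f y - C)\<^sup>2)) \<in> borel_measurable PX" using fm by measurable
    qed
    finally show ?thesis unfolding V_def C_def .
  qed
  have step2: "(\<integral>\<^sup>+x. V x \<partial>PX) = ennreal ((\<integral>x. (f x)\<^sup>2 \<partial>PX) - (\<integral>x. (\<integral>y. f y \<partial>Q x)\<^sup>2 \<partial>PX))"
    unfolding V_def by (rule mk.var_int[OF mkQ fm f2])
  have Wm0: "(\<lambda>z. W k z) \<in> borel_measurable (Phi k)" if k: "k \<in> K" for k
  proof -
    have Qkm: "Qk k \<in> Phi k \<rightarrow>\<^sub>M subprob_algebra (Phi k)" using mk.T_sub[OF mkQk[OF k]] .
    have fk: "(\<lambda>w. f (k, w)) \<in> borel_measurable (Phi k)"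
      unfolding measurable_cong_sets[OF sets_Phi refl] by (rule meas_sec[OF k fm])
    have Tf: "(\<lambda>z. \<integral>w. f (k, w) \<partial>Qk k z) \<in> borel_measurable (Phi k)" using mk.meas_Tf[OF mkQk[OF k] fk] .
    have "(\<lambda>(z, w). ennreal ((f (k, w) - (\<integral>w. f (k, w) \<partial>Qk k z))\<^sup>2)) \<in> borel_measurable (Phi k \<Otimes>\<^sub>M Phi k)"
      using fk Tf by measurable
    from nn_integral_measurable_subprob_algebra2[OF this Qkm]
    show "(\<lambda>z. W k z) \<in> borel_measurable (Phi k)" unfolding W_def by simp
  qed
  have Wm: "(\<lambda>z. ennreal (c k ^ t) * W k z) \<in> borel_measurable (Psi k)" if k: "k \<in> K" for k
  proof -
    have [measurable]: "(\<lambda>z. W k z) \<in> borel_measurable (Psi k)"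
      using Wm0[OF k] unfolding measurable_cong_sets[OF sets_Phi refl] .
    show ?thesis by measurable
  qed
  have step3: "(\<integral>\<^sup>+x. ennreal (c (fst x) ^ t) * W (fst x) (snd x) \<partial>PX) \<le> (\<integral>\<^sup>+x. V x \<partial>PX)"
  proof (rule nn_integral_mono)
    fix x assume "x \<in> space PX"
    then obtain k z where x: "x = (k, z)" "k \<in> K" "z \<in> space (Psi k)" by (auto simp: space_Pi Xspace_def)
    show "ennreal (c (fst x) ^ t) * W (fst x) (snd x) \<le> V x" using step1[OF x(2,3)] x(1) by simp
  qed
  have step4: "(\<integral>\<^sup>+x. ennreal (c (fst x) ^ t) * W (fst x) (snd x) \<partial>PX)
      = (\<integral>\<^sup>+k. ennreal (w k) * (\<integral>\<^sup>+z. ennreal (c k ^ t) * W k z \<partial>Phi k) \<partial>count_space K)"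
  proof -
    have gl: "(\<lambda>x. ennreal (c (fst x) ^ t) * W (fst x) (snd x)) \<in> borel_measurable PX"
      using meas_glue[of "\<lambda>k z. ennreal (c k ^ t) * W k z"] Wm by blast
    show ?thesis unfolding nn_Pi2[OF gl] by simp
  qed
  have step5: "ennreal (a * (1 - b\<^sup>2) * (\<integral>z. (f (k, z) - gm f (k, z))\<^sup>2 \<partial>Phi k))
      \<le> (\<integral>\<^sup>+z. ennreal (c k ^ t) * W k z \<partial>Phi k)" if k: "k \<in> K" for k
  proof -
    have fk: "(\<lambda>w. f (k, w)) \<in> borel_measurable (Phi k)" using sec_meas[OF fm f2 k] .
    have fk2: "integrable (Phi k) (\<lambda>w. (f (k, w))\<^sup>2)" using sec_L2[OF fm f2 k] .
    have fk1: "integrable (Phi k) (\<lambda>w. f (k, w))" using sec_L1[OF fm f2 k] .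
    interpret pk: prob_space "Phi k" using prob_Phi[OF k] .
    define S where "S = (\<integral>z. (f (k, z))\<^sup>2 \<partial>Phi k)"
    define R where "R = (\<integral>z. (\<integral>w. f (k, w) \<partial>Qk k z)\<^sup>2 \<partial>Phi k)"
    define m where "m = mean f k"
    define ok where "ok = opnorm (Phi k) (Qk k)"
    have vi: "(\<integral>\<^sup>+z. W k z \<partial>Phi k) = ennreal (S - R)"
      unfolding W_def S_def R_def by (rule mk.var_int[OF mkQk[OF k] fk fk2])
    have db: "R \<le> ok\<^sup>2 * (S - m\<^sup>2) + m\<^sup>2"
      using mk.dec_bound[OF mkQk[OF k] fk fk2] by (simp add: R_def S_def ok_def m_def mean_def)
    have var: "(\<integral>z. (f (k, z) - gm f (k, z))\<^sup>2 \<partial>Phi k) = S - m\<^sup>2"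
      using pk.variance_eq[OF fk1 fk2] by (simp add: gm_def S_def m_def mean_def)
    have Sm: "0 \<le> S - m\<^sup>2" using mean_sq_le[OF fm f2 k] by (simp add: S_def m_def)
    have okb: "ok\<^sup>2 \<le> b\<^sup>2" unfolding ok_def using b_ge[OF k] opk_nonneg[OF k] by (intro power_mono) auto
    have b1: "b\<^sup>2 \<le> 1" using b_le1 b_nonneg by (simp add: power_le_one)
    have "(1 - b\<^sup>2) * (S - m\<^sup>2) \<le> (1 - ok\<^sup>2) * (S - m\<^sup>2)" using okb Sm by (intro mult_right_mono) auto
    also have "\<dots> \<le> S - R" using db by (simp add: algebra_simps)
    finally have e1: "(1 - b\<^sup>2) * (S - m\<^sup>2) \<le> S - R" .
    have "a * ((1 - b\<^sup>2) * (S - m\<^sup>2)) \<le> c k ^ t * (S - R)"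
      using a_le[OF k] a_nonneg e1 b1 Sm by (intro mult_mono) auto
    moreover have "0 \<le> S - R" using e1 b1 Sm by (smt (verit) mult_nonneg_nonneg)
    ultimately have "ennreal (a * (1 - b\<^sup>2) * (S - m\<^sup>2)) \<le> ennreal (c k ^ t) * ennreal (S - R)"
      using ct_nonneg[OF k] by (simp add: ennreal_mult[symmetric] mult.assoc)
    also have "\<dots> = (\<integral>\<^sup>+z. ennreal (c k ^ t) * W k z \<partial>Phi k)"
      using vi by (simp add: nn_integral_cmult[OF Wm0[OF k]])
    finally show ?thesis using var by simp
  qed
  have wi: "integrable (count_space K) (\<lambda>k. w k * (\<integral>z. (f (k, z) - gm f (k, z))\<^sup>2 \<partial>Phi k))"
    using int_Pi(1)[OF within_L1[OF fm f2]] .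
  have wint: "(\<integral>x. (f x - gm f x)\<^sup>2 \<partial>PX) = (\<integral>k. w k * (\<integral>z. (f (k, z) - gm f (k, z))\<^sup>2 \<partial>Phi k) \<partial>count_space K)"
    using int_Pi(2)[OF within_L1[OF fm f2]] .
  have nnw: "\<And>k. 0 \<le> w k * (\<integral>z. (f (k, z) - gm f (k, z))\<^sup>2 \<partial>Phi k)"
    by (simp add: w_def)
  have "ennreal (a * (1 - b\<^sup>2) * (\<integral>x. (f x - gm f x)\<^sup>2 \<partial>PX))
     = (\<integral>\<^sup>+k. ennreal (a * (1 - b\<^sup>2) * (w k * (\<integral>z. (f (k, z) - gm f (k, z))\<^sup>2 \<partial>Phi k))) \<partial>count_space K)"
  proof -
    have "(\<integral>\<^sup>+k. ennreal (a * (1 - b\<^sup>2) * (w k * (\<integral>z. (f (k, z) - gm f (k, z))\<^sup>2 \<partial>Phi k))) \<partial>count_space K)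
        = ennreal (\<integral>k. a * (1 - b\<^sup>2) * (w k * (\<integral>z. (f (k, z) - gm f (k, z))\<^sup>2 \<partial>Phi k)) \<partial>count_space K)"
      using wi a_nonneg b_le1 b_nonneg nnw
      by (intro nn_integral_eq_integral) (auto intro!: mult_nonneg_nonneg simp: power_le_one)
    then show ?thesis using wint by simp
  qed
  also have "\<dots> \<le> (\<integral>\<^sup>+k. ennreal (w k) * (\<integral>\<^sup>+z. ennreal (c k ^ t) * W k z \<partial>Phi k) \<partial>count_space K)"
  proof (rule nn_integral_mono)
    fix k assume "k \<in> space (count_space K)"
    then have k: "k \<in> K" by simp
    have "ennreal (a * (1 - b\<^sup>2) * (w k * (\<integral>z. (f (k, z) - gm f (k, z))\<^sup>2 \<partial>Phi k)))
        = ennreal (w k) * ennreal (a * (1 - b\<^sup>2) * (\<integral>z. (f (k, z) - gm f (k, z))\<^sup>2 \<partial>Phi k))"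
      using w_pos[OF k] by (simp add: ennreal_mult'[symmetric] mult_ac)
    also have "\<dots> \<le> ennreal (w k) * (\<integral>\<^sup>+z. ennreal (c k ^ t) * W k z \<partial>Phi k)"
      by (rule mult_left_mono[OF step5[OF k]]) simp
    finally show "ennreal (a * (1 - b\<^sup>2) * (w k * (\<integral>z. (f (k, z) - gm f (k, z))\<^sup>2 \<partial>Phi k)))
        \<le> ennreal (w k) * (\<integral>\<^sup>+z. ennreal (c k ^ t) * W k z \<partial>Phi k)" .
  qed
  also have "\<dots> \<le> ennreal ((\<integral>x. (f x)\<^sup>2 \<partial>PX) - (\<integral>x. (\<integral>y. f y \<partial>Q x)\<^sup>2 \<partial>PX))"
    using step3 step2 step4 by simp
  finally have "ennreal (a * (1 - b\<^sup>2) * (\<integral>x. (f x - gm f x)\<^sup>2 \<partial>PX))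
       \<le> ennreal ((\<integral>x. (f x)\<^sup>2 \<partial>PX) - (\<integral>x. (\<integral>y. f y \<partial>Q x)\<^sup>2 \<partial>PX))" .
  moreover have "0 \<le> (\<integral>x. (f x)\<^sup>2 \<partial>PX) - (\<integral>x. (\<integral>y. f y \<partial>Q x)\<^sup>2 \<partial>PX)"
    using mk.L2_contr(2)[OF mkQ fm f2] by simp
  ultimately show ?thesis by simp
qed

end




lemma bind_int:
  fixes g :: "'b \<Rightarrow> real"
  assumes A: "prob_space A" and N: "N \<in> A \<rightarrow>\<^sub>M prob_algebra Bm" and g: "integrable (bind A N) g"
  shows "AE y in A. integrable (N y) g" "(\<integral>x. g x \<partial>bind A N) = (\<integral>y. (\<integral>x. g x \<partial>N y) \<partial>A)"
proof -
  have Ns: "N \<in> A \<rightarrow>\<^sub>M subprob_algebra Bm" using measurable_prob_algebraD[OF N] .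
  have ne: "space A \<noteq> {}" using prob_space.not_empty[OF A] .
  have Nsets: "\<And>y. y \<in> space A \<Longrightarrow> sets (N y) = sets Bm" using measurable_space[OF N] by (auto simp: space_prob_algebra)
  have Nprob: "\<And>y. y \<in> space A \<Longrightarrow> prob_space (N y)" using measurable_space[OF N] by (auto simp: space_prob_algebra)
  have sb: "sets (bind A N) = sets Bm" using ne Nsets by (intro sets_bind) auto
  have gm: "g \<in> borel_measurable Bm" using g sb by (auto cong: measurable_cong_sets)
  have nnb: "\<And>h. h \<in> borel_measurable Bm \<Longrightarrow> (\<integral>\<^sup>+x. h x \<partial>bind A N) = (\<integral>\<^sup>+y. \<integral>\<^sup>+x. h x \<partial>N y \<partial>A)"
    using nn_integral_bind Ns by blast
  have aei: "AE y in A. integrable (N y) h" if h: "integrable (bind A N) h" for h :: "'b \<Rightarrow> real"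
  proof -
    have hm: "h \<in> borel_measurable Bm" using h sb by (auto cong: measurable_cong_sets)
    have "(\<integral>\<^sup>+y. \<integral>\<^sup>+x. ennreal (norm (h x)) \<partial>N y \<partial>A) < \<infinity>"
      using h nnb[of "\<lambda>x. ennreal (norm (h x))"] hm by (simp add: integrable_iff_bounded)
    then have fin: "(\<integral>\<^sup>+y. \<integral>\<^sup>+x. ennreal (norm (h x)) \<partial>N y \<partial>A) \<noteq> \<infinity>" by simp
    have meas: "(\<lambda>y. \<integral>\<^sup>+x. ennreal (norm (h x)) \<partial>N y) \<in> borel_measurable A"
      using measurable_compose[OF Ns nn_integral_measurable_subprob_algebra[of "\<lambda>x. ennreal (norm (h x))" Bm]] hm
      by measurable
    show ?thesis using nn_integral_PInf_AE[OF meas fin]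
    proof (rule AE_mp, intro AE_I2 impI)
      fix y assume y: "y \<in> space A" and "(\<integral>\<^sup>+x. ennreal (norm (h x)) \<partial>N y) \<noteq> \<infinity>"
      then show "integrable (N y) h" using hm Nsets[OF y]
        by (auto simp: integrable_iff_bounded top.not_eq_extremum cong: measurable_cong_sets)
    qed
  qed
  show "AE y in A. integrable (N y) g" by (rule aei[OF g])
  have nonneg: "(\<integral>x. h x \<partial>bind A N) = (\<integral>y. (\<integral>x. h x \<partial>N y) \<partial>A)"
    if h: "integrable (bind A N) h" and hn: "\<And>x. 0 \<le> h x" for h :: "'b \<Rightarrow> real"
  proof -
    have hm: "h \<in> borel_measurable Bm" using h sb by (auto cong: measurable_cong_sets)
    have ae: "AE y in A. (\<integral>\<^sup>+x. ennreal (h x) \<partial>N y) = ennreal (\<integral>x. h x \<partial>N y)"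
      using aei[OF h] by eventually_elim (rule nn_integral_eq_integral, auto simp: hn)
    have "(\<integral>x. h x \<partial>bind A N) = enn2real (\<integral>\<^sup>+x. ennreal (h x) \<partial>bind A N)"
      by (rule integral_eq_nn_integral) (use h hn in auto)
    also have "(\<integral>\<^sup>+x. ennreal (h x) \<partial>bind A N) = (\<integral>\<^sup>+y. \<integral>\<^sup>+x. ennreal (h x) \<partial>N y \<partial>A)"
      using nnb hm by simp
    also have "\<dots> = (\<integral>\<^sup>+y. ennreal (\<integral>x. h x \<partial>N y) \<partial>A)" by (rule nn_integral_cong_AE[OF ae])
    also have "enn2real \<dots> = (\<integral>y. (\<integral>x. h x \<partial>N y) \<partial>A)"
    proof (rule integral_eq_nn_integral[symmetric])
      show "(\<lambda>y. \<integral>x. h x \<partial>N y) \<in> borel_measurable A"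
        using measurable_compose[OF Ns integral_measurable_subprob_algebra[OF hm]] by simp
      show "AE y in A. 0 \<le> (\<integral>x. h x \<partial>N y)" by (intro AE_I2 integral_nonneg_AE) (auto simp: hn)
    qed
    finally show ?thesis .
  qed
  have inn: "integrable A (\<lambda>y. \<integral>x. h x \<partial>N y)"
    if h: "integrable (bind A N) h" and hn: "\<And>x. 0 \<le> h x" for h :: "'b \<Rightarrow> real"
  proof -
    have hm: "h \<in> borel_measurable Bm" using h sb by (auto cong: measurable_cong_sets)
    have "(\<integral>\<^sup>+y. ennreal (norm (\<integral>x. h x \<partial>N y)) \<partial>A) \<le> (\<integral>\<^sup>+y. \<integral>\<^sup>+x. ennreal (h x) \<partial>N y \<partial>A)"
    proof (rule nn_integral_mono_AE)
      show "AE y in A. ennreal (norm (\<integral>x. h x \<partial>N y)) \<le> (\<integral>\<^sup>+x. ennreal (h x) \<partial>N y)"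
        using aei[OF h]
      proof (rule AE_mp, intro AE_I2 impI)
        fix y assume "y \<in> space A" "integrable (N y) h"
        moreover have "0 \<le> (\<integral>x. h x \<partial>N y)" by (intro integral_nonneg_AE AE_I2) (auto simp: hn)
        ultimately show "ennreal (norm (\<integral>x. h x \<partial>N y)) \<le> (\<integral>\<^sup>+x. ennreal (h x) \<partial>N y)"
          using nn_integral_eq_integral[of "N y" h] hn by auto
      qed
    qed
    also have "\<dots> = (\<integral>\<^sup>+x. ennreal (h x) \<partial>bind A N)" using nnb hm by simp
    also have "\<dots> = (\<integral>\<^sup>+x. ennreal (norm (h x)) \<partial>bind A N)" by (intro nn_integral_cong) (auto simp: hn)
    also have "\<dots> < \<infinity>" using h by (simp add: integrable_iff_bounded)
    finally show ?thesis
      using measurable_compose[OF Ns integral_measurable_subprob_algebra[OF hm]]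
      by (simp add: integrable_iff_bounded)
  qed
  define gp where "gp x = max (g x) 0" for x
  define gn where "gn x = max (- g x) 0" for x
  have ip: "integrable (bind A N) gp" unfolding gp_def using g by auto
  have ineg: "integrable (bind A N) gn" unfolding gn_def using g by auto
  have ge: "g = (\<lambda>x. gp x - gn x)" unfolding gp_def gn_def by (auto simp: fun_eq_iff)
  have ae: "AE y in A. (\<integral>x. g x \<partial>N y) = (\<integral>x. gp x \<partial>N y) - (\<integral>x. gn x \<partial>N y)"
    using aei[OF g]
  proof (rule AE_mp, intro AE_I2 impI)
    fix y assume "y \<in> space A" "integrable (N y) g"
    then have "integrable (N y) gp" "integrable (N y) gn" unfolding gp_def gn_def by auto
    then show "(\<integral>x. g x \<partial>N y) = (\<integral>x. gp x \<partial>N y) - (\<integral>x. gn x \<partial>N y)" by (subst ge) simp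
  qed
  have i1: "integrable A (\<lambda>y. \<integral>x. gp x \<partial>N y)" by (rule inn[OF ip]) (simp add: gp_def)
  have i2: "integrable A (\<lambda>y. \<integral>x. gn x \<partial>N y)" by (rule inn[OF ineg]) (simp add: gn_def)
  have "(\<integral>x. g x \<partial>bind A N) = (\<integral>x. gp x \<partial>bind A N) - (\<integral>x. gn x \<partial>bind A N)"
    using ip ineg by (subst ge) simp
  also have "\<dots> = (\<integral>y. (\<integral>x. gp x \<partial>N y) \<partial>A) - (\<integral>y. (\<integral>x. gn x \<partial>N y) \<partial>A)"
    using nonneg[OF ip] nonneg[OF ineg] by (simp add: gp_def gn_def)
  also have "\<dots> = (\<integral>y. (\<integral>x. gp x \<partial>N y) - (\<integral>x. gn x \<partial>N y) \<partial>A)" using i1 i2 by simp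
  also have "\<dots> = (\<integral>y. (\<integral>x. g x \<partial>N y) \<partial>A)"
  proof (rule integral_cong_AE)
    show "(\<lambda>y. (\<integral>x. gp x \<partial>N y) - (\<integral>x. gn x \<partial>N y)) \<in> borel_measurable A" using i1 i2 by auto
    show "(\<lambda>y. \<integral>x. g x \<partial>N y) \<in> borel_measurable A"
      using measurable_compose[OF Ns integral_measurable_subprob_algebra[OF gm]] by simp
  qed (use ae in auto)
  finally show "(\<integral>x. g x \<partial>bind A N) = (\<integral>y. (\<integral>x. g x \<partial>N y) \<partial>A)" .
qed

lemma cs_aux:
  fixes X A Bv l :: real
  assumes X: "\<And>s. 0 < s \<Longrightarrow> X \<le> (s * A + Bv / s) / 2" and A: "0 \<le> A" and Bv: "Bv \<le> l\<^sup>2 * A" and l: "0 \<le> l"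
  shows "X \<le> l * A"
proof (cases "l = 0")
  case False
  then have lp: "0 < l" using l by simp
  have "X \<le> (l * A + Bv / l) / 2" using X[OF lp] .
  also have "Bv / l \<le> l * A" using Bv lp by (simp add: divide_le_eq power2_eq_square mult.commute mult.left_commute)
  finally show ?thesis by (simp add: mult.commute)
next
  case True
  then have B0: "Bv \<le> 0" using Bv by simp
  show ?thesis
  proof (rule ccontr)
    assume "\<not> X \<le> l * A"
    then have Xp: "0 < X" using True by simp
    show False
    proof (cases "A = 0")
      case True
      then show False using X[of 1] B0 Xp by simp
    next
      case False
      then have Ap: "0 < A" using A by simp
      have "X \<le> ((X / A) * A + Bv / (X / A)) / 2" using X[of "X / A"] Xp Ap by simp
      also have "Bv / (X / A) \<le> 0" using B0 Xp Ap by (intro divide_nonpos_pos) auto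
      finally show False using Xp Ap by simp
    qed
  qed
qed


lemma amgm: fixes x y s :: real assumes s: "0 < s" shows "x * y \<le> (s * x\<^sup>2 + y\<^sup>2 / s) / 2"
proof -
  have "0 \<le> (s * x - y)\<^sup>2" by simp
  then have "2 * s * (x * y) \<le> s * (s * x\<^sup>2) + y\<^sup>2" by (simp add: power2_diff power2_eq_square algebra_simps)
  then have "2 * s * (x * y) \<le> s * (s * x\<^sup>2 + y\<^sup>2 / s)" using s by (simp add: algebra_simps)
  then have "2 * (x * y) \<le> s * x\<^sup>2 + y\<^sup>2 / s" using s by (simp add: mult.assoc)
  then show ?thesis by simp
qed

lemma abs_le_amgm: fixes x y :: real shows "\<bar>x\<bar> * \<bar>y\<bar> \<le> (x\<^sup>2 + y\<^sup>2) / 2"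
  using amgm[of 1 "\<bar>x\<bar>" "\<bar>y\<bar>"] by simp

context thm5
begin

definition "B k = {k} \<times> space (Psi k)"
definition "p k x = measure (P x) (B k)"
definition "J k k' = (\<integral>x. p k x * p k' x \<partial>PX)"

lemma B_sets: "k \<in> K \<Longrightarrow> B k \<in> sets PX" unfolding B_def by (rule block_sets)

lemma P_sub: "P \<in> PX \<rightarrow>\<^sub>M subprob_algebra PX" using mk.T_sub[OF mkP] .

lemma p_meas[measurable]: "k \<in> K \<Longrightarrow> (\<lambda>x. p k x) \<in> borel_measurable PX"
  unfolding p_def measure_def by (intro borel_measurable_enn2real measurable_emeasure_kernel[OF P_sub B_sets])

lemma p_nonneg: "0 \<le> p k x" by (simp add: p_def)

lemma p_le1: "x \<in> space PX \<Longrightarrow> p k x \<le> 1"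
  unfolding p_def using prob_space.prob_le_1[OF P_prob] by simp

lemma p_e: "x \<in> space PX \<Longrightarrow> emeasure (P x) (B k) = ennreal (p k x)"
proof -
  assume x: "x \<in> space PX"
  interpret pr: prob_space "P x" by (rule P_prob[OF x])
  show ?thesis unfolding p_def by (rule pr.emeasure_eq_measure)
qed

lemma pairsf: "pair_sigma_finite (count_space K) PX"
proof -
  interpret p: prob_space PX by (rule prob_Pi)
  show ?thesis unfolding pair_sigma_finite_def
    using sigma_finite_measure_count_space_countable[OF K(1)] p.sigma_finite_measure_axioms by simp
qed

lemma p_sum: "x \<in> space PX \<Longrightarrow> (\<integral>\<^sup>+k. ennreal (p k x) \<partial>count_space K) = 1"
proof -
  assume x: "x \<in> space PX"
  have sP: "sets (P x) = sets PX" by (rule P_sets[OF x])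
  have "(\<integral>\<^sup>+k. ennreal (p k x) \<partial>count_space K) = (\<integral>\<^sup>+k. emeasure (P x) (B k) \<partial>count_space K)"
    by (intro nn_integral_cong) (simp add: p_e[OF x])
  also have "\<dots> = emeasure (P x) (\<Union>(B ` K))"
  proof (rule emeasure_UN_countable[symmetric])
    show "\<And>i. i \<in> K \<Longrightarrow> B i \<in> sets (P x)" using B_sets sP by simp
    show "countable K" by (rule K(1))
    show "disjoint_family_on B K" unfolding disjoint_family_on_def B_def by auto
  qed
  also have "\<Union>(B ` K) = space (P x)"
    using sets_eq_imp_space_eq[OF sP] by (auto simp: B_def space_Pi Xspace_def)
  also have "emeasure (P x) (space (P x)) = 1" using prob_space.emeasure_space_1[OF P_prob[OF x]] .
  finally show ?thesis .
qed

lemma p_int: "k \<in> K \<Longrightarrow> (\<integral>\<^sup>+x. ennreal (p k x) \<partial>PX) = ennreal (w k)"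
proof -
  assume k: "k \<in> K"
  have "(\<integral>\<^sup>+x. ennreal (p k x) \<partial>PX) = (\<integral>\<^sup>+x. emeasure (P x) (B k) \<partial>PX)"
    by (intro nn_integral_cong) (simp add: p_e)
  also have "\<dots> = emeasure (bind PX P) (B k)"
    using prob_space.not_empty[OF prob_Pi] by (intro emeasure_bind[symmetric, OF _ P_sub B_sets[OF k]])
  also have "\<dots> = emeasure PX (B k)" using P_inv by simp
  also have "\<dots> = ennreal (w k)" using emeasure_Pi_block[OF k] w_eq[OF k] by (simp add: B_def)
  finally show ?thesis .
qed

lemma pp_int: "k \<in> K \<Longrightarrow> k' \<in> K \<Longrightarrow> integrable PX (\<lambda>x. p k x * p k' x)"
proof -
  assume k: "k \<in> K" and k': "k' \<in> K"
  interpret pr: prob_space PX by (rule prob_Pi)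
  show ?thesis
  proof (rule pr.integrable_const_bound[where B=1])
    show "AE x in PX. norm (p k x * p k' x) \<le> 1"
      by (intro AE_I2) (use p_le1 p_nonneg in \<open>auto intro!: mult_le_one simp: abs_mult\<close>)
  qed (use k k' in measurable)
qed

lemma J_nonneg: "0 \<le> J k k'" unfolding J_def by (intro integral_nonneg_AE AE_I2) (simp add: p_nonneg)
lemma J_sym: "J k k' = J k' k" unfolding J_def by (simp add: mult.commute)

lemma J_e: "k \<in> K \<Longrightarrow> k' \<in> K \<Longrightarrow> (\<integral>\<^sup>+x. ennreal (p k x * p k' x) \<partial>PX) = ennreal (J k k')"
  unfolding J_def by (rule nn_integral_eq_integral[OF pp_int]) (auto simp: p_nonneg)

lemma J_rowsum: "k \<in> K \<Longrightarrow> (\<integral>\<^sup>+k'. ennreal (J k k') \<partial>count_space K) = ennreal (w k)"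
proof -
  assume k: "k \<in> K"
  interpret ps: pair_sigma_finite "count_space K" PX by (rule pairsf)
  have meas: "(\<lambda>(k', x). ennreal (p k x * p k' x)) \<in> borel_measurable (count_space K \<Otimes>\<^sub>M PX)"
  proof (rule measurable_pair_measure_countable1[OF K(1)])
    fix k' assume k': "k' \<in> K"
    note [measurable] = p_meas[OF k] p_meas[OF k']
    show "(\<lambda>x. case (k', x) of (k', x) \<Rightarrow> ennreal (p k x * p k' x)) \<in> borel_measurable PX" by simp
  qed
  have "(\<integral>\<^sup>+k'. ennreal (J k k') \<partial>count_space K) = (\<integral>\<^sup>+k'. \<integral>\<^sup>+x. ennreal (p k x * p k' x) \<partial>PX \<partial>count_space K)"
    by (intro nn_integral_cong) (simp add: J_e k)
  also have "\<dots> = (\<integral>\<^sup>+x. \<integral>\<^sup>+k'. ennreal (p k x * p k' x) \<partial>count_space K \<partial>PX)"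
    using ps.Fubini'[OF meas] by simp
  also have "\<dots> = (\<integral>\<^sup>+x. ennreal (p k x) \<partial>PX)"
  proof (rule nn_integral_cong)
    fix x assume x: "x \<in> space PX"
    have "(\<integral>\<^sup>+k'. ennreal (p k x * p k' x) \<partial>count_space K) = (\<integral>\<^sup>+k'. ennreal (p k x) * ennreal (p k' x) \<partial>count_space K)"
      by (simp add: ennreal_mult p_nonneg)
    also have "\<dots> = ennreal (p k x) * (\<integral>\<^sup>+k'. ennreal (p k' x) \<partial>count_space K)"
      by (rule nn_integral_cmult) simp
    also have "\<dots> = ennreal (p k x)" using p_sum[OF x] by simp
    finally show "(\<integral>\<^sup>+k'. ennreal (p k x * p k' x) \<partial>count_space K) = ennreal (p k x)" .
  qed
  also have "\<dots> = ennreal (w k)" by (rule p_int[OF k])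
  finally show ?thesis .
qed

lemma tm_real: "tm = ennreal (enn2real tm)" using tm_fin by simp
lemma tr_pos: "0 < enn2real tm" using tm_fin tm_pos by (simp add: enn2real_positive_iff less_top[symmetric] zero_less_iff_neq_zero)
lemma u_real: "k \<in> K \<Longrightarrow> u k = ennreal (enn2real (u k))" using u_fin by simp
lemma ur_pos: "k \<in> K \<Longrightarrow> 0 < enn2real (u k)" using u_fin u_pos by (simp add: enn2real_positive_iff less_top[symmetric] zero_less_iff_neq_zero)
lemma w_real: "k \<in> K \<Longrightarrow> w k = enn2real (u k) / enn2real tm"
  unfolding w_def using tr_pos by (subst u_real, simp, subst tm_real) (simp add: divide_ennreal)

lemma weight_eq: "k \<in> K \<Longrightarrow> k' \<in> K \<Longrightarrow> barP_weight K Psi P k k' = ennreal (J k k' / w k)"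
proof -
  assume k: "k \<in> K" and k': "k' \<in> K"
  define \<phi> where "\<phi> x = emeasure (P x) ({k} \<times> space (Psi k)) * emeasure (P x) ({k'} \<times> space (Psi k'))" for x
  have \<phi>m: "\<phi> \<in> borel_measurable PX"
    unfolding \<phi>_def using measurable_emeasure_kernel[OF P_sub block_sets[OF k]] measurable_emeasure_kernel[OF P_sub block_sets[OF k']]
    by measurable
  have "(\<integral>\<^sup>+x. \<phi> x \<partial>PX) = ennreal (J k k')"
  proof -
    have "(\<integral>\<^sup>+x. \<phi> x \<partial>PX) = (\<integral>\<^sup>+x. ennreal (p k x * p k' x) \<partial>PX)"
      by (intro nn_integral_cong) (simp add: \<phi>_def p_e[unfolded B_def] ennreal_mult p_nonneg)
    then show ?thesis using J_e[OF k k'] by simp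
  qed
  moreover have "(\<integral>\<^sup>+x. \<phi> x \<partial>PX) = inverse tm * (\<integral>\<^sup>+k''. (\<integral>\<^sup>+z. \<phi> (k'', z) \<partial>Psi k'') \<partial>count_space K)"
    unfolding nn_integral_Pi[OF \<phi>m] by (rule nn_integral_cmult) simp
  ultimately have eq: "(\<integral>\<^sup>+k''. (\<integral>\<^sup>+z. \<phi> (k'', z) \<partial>Psi k'') \<partial>count_space K) = ennreal (enn2real tm * J k k')"
  proof -
    assume a1: "(\<integral>\<^sup>+x. \<phi> x \<partial>PX) = ennreal (J k k')"
      and a2: "(\<integral>\<^sup>+x. \<phi> x \<partial>PX) = inverse tm * (\<integral>\<^sup>+k''. (\<integral>\<^sup>+z. \<phi> (k'', z) \<partial>Psi k'') \<partial>count_space K)"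
    have "tm * (inverse tm * (\<integral>\<^sup>+k''. (\<integral>\<^sup>+z. \<phi> (k'', z) \<partial>Psi k'') \<partial>count_space K))
        = (\<integral>\<^sup>+k''. (\<integral>\<^sup>+z. \<phi> (k'', z) \<partial>Psi k'') \<partial>count_space K)"
      using tm_pos tm_fin ennreal_inv_mult_self[of tm] by (simp add: mult.assoc[symmetric] mult.commute)
    then show ?thesis using a1 a2 tm_real J_nonneg by (metis ennreal_mult tr_pos less_imp_le)
  qed
  have "barP_weight K Psi P k k' = ennreal (enn2real tm * J k k') / u k"
    unfolding barP_weight_def using eq by (simp add: \<phi>_def u_def)
  also have "\<dots> = ennreal (enn2real tm * J k k' / enn2real (u k))"
    using ur_pos[OF k] tr_pos J_nonneg[of k k'] by (subst u_real[OF k]) (simp add: divide_ennreal)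
  also have "enn2real tm * J k k' / enn2real (u k) = J k k' / w k"
    using tr_pos ur_pos[OF k] by (simp add: w_real[OF k] field_simps)
  finally show ?thesis .
qed

lemma dens_single: "k' \<in> K \<Longrightarrow> emeasure (density (count_space K) f) {k'} = f k'"
proof -
  assume k': "k' \<in> K"
  have "emeasure (density (count_space K) f) {k'} = (\<integral>\<^sup>+x. f x * indicator {k'} x \<partial>count_space K)"
    using k' by (simp add: emeasure_density)
  also have "\<dots> = f k' * emeasure (count_space K) {k'}"
    using k' by (intro nn_integral_indicator_singleton) simp
  also have "\<dots> = f k'" using k' by simp
  finally show ?thesis .
qed

lemma dens_space: "emeasure (density (count_space K) f) K = (\<integral>\<^sup>+k. f k \<partial>count_space K)"
proof -
  have "emeasure (density (count_space K) f) K = (\<integral>\<^sup>+x. f x * indicator K x \<partial>count_space K)"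
    by (simp add: emeasure_density)
  also have "\<dots> = (\<integral>\<^sup>+k. f k \<partial>count_space K)" by (intro nn_integral_cong) simp
  finally show ?thesis .
qed

lemma sum_w: "(\<integral>\<^sup>+k. ennreal (w k) \<partial>count_space K) = 1"
proof -
  have "1 = emeasure PX (space PX)" using prob_space.emeasure_space_1[OF prob_Pi] by simp
  also have "\<dots> = (\<integral>\<^sup>+x. 1 \<partial>PX)" by simp
  also have "\<dots> = (\<integral>\<^sup>+k. ennreal (w k) * (\<integral>\<^sup>+z. 1 \<partial>Phi k) \<partial>count_space K)"
    by (rule nn_Pi2) simp
  also have "\<dots> = (\<integral>\<^sup>+k. ennreal (w k) \<partial>count_space K)"
    by (intro nn_integral_cong) (simp add: prob_space.emeasure_space_1[OF prob_Phi, simplified])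
  finally show ?thesis ..
qed

lemma barPi_eq: "barPi K Psi = density (count_space K) (\<lambda>k. ennreal (w k))"
  unfolding barPi_def
  by (rule density_cong) (auto simp: AE_count_space emeasure_Pi_block w_eq)

lemma barP_eq: "k \<in> K \<Longrightarrow> barP K Psi P k = density (count_space K) (\<lambda>k'. ennreal (J k k' / w k))"
  unfolding barP_def
  by (rule density_cong) (auto simp: AE_count_space weight_eq)

lemma sets_barPi[simp]: "sets (barPi K Psi) = Pow K" by (simp add: barPi_eq)
lemma space_barPi[simp]: "space (barPi K Psi) = K" by (simp add: barPi_eq)

lemma prob_barPi: "prob_space (barPi K Psi)"
proof
  show "emeasure (barPi K Psi) (space (barPi K Psi)) = 1"
    unfolding barPi_eq using sum_w by (simp add: dens_space)
qed

lemma barP_prob: "k \<in> K \<Longrightarrow> prob_space (barP K Psi P k)"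
proof
  assume k: "k \<in> K"
  have "(\<integral>\<^sup>+k'. ennreal (J k k' / w k) \<partial>count_space K) = (\<integral>\<^sup>+k'. ennreal (J k k') * ennreal (1 / w k) \<partial>count_space K)"
    using w_pos[OF k] J_nonneg by (intro nn_integral_cong) (simp add: ennreal_mult[symmetric])
  also have "\<dots> = (\<integral>\<^sup>+k'. ennreal (J k k') \<partial>count_space K) * ennreal (1 / w k)"
    by (rule nn_integral_multc) simp
  also have "\<dots> = 1" using J_rowsum[OF k] w_pos[OF k] by (simp add: ennreal_mult[symmetric])
  finally show "emeasure (barP K Psi P k) (space (barP K Psi P k)) = 1"
    using k by (simp add: barP_eq dens_space)
qed

lemma sets_barP: "k \<in> K \<Longrightarrow> sets (barP K Psi P k) = Pow K" by (simp add: barP_eq)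

lemma mk_bar: "mk (barPi K Psi) (barP K Psi P)"
  unfolding mk_def
proof (intro conjI)
  show "prob_space (barPi K Psi)" by (rule prob_barPi)
  show bm: "barP K Psi P \<in> barPi K Psi \<rightarrow>\<^sub>M prob_algebra (barPi K Psi)"
    unfolding measurable_cong_sets[OF sets_barPi[unfolded sets_count_space[of K, symmetric]] refl]
  proof (rule measurable_count_space_eq1[THEN iffD2], rule Pi_I)
    fix k assume k: "k \<in> K"
    show "barP K Psi P k \<in> space (prob_algebra (barPi K Psi))"
      using barP_prob[OF k] sets_barP[OF k] by (simp add: space_prob_algebra)
  qed
  show "barPi K Psi \<bind> barP K Psi P = barPi K Psi"
  proof (rule measure_eqI_countable[OF _ _ K(1)])
    show "sets (barPi K Psi \<bind> barP K Psi P) = Pow K"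
      using K(2) by (subst sets_bind[where N="count_space K"]) (auto simp: sets_barP)
    show "sets (barPi K Psi) = Pow K" by simp
    fix k' assume k': "k' \<in> K"
    have "emeasure (barPi K Psi \<bind> barP K Psi P) {k'} = (\<integral>\<^sup>+k. emeasure (barP K Psi P k) {k'} \<partial>barPi K Psi)"
      using K(2) k' measurable_prob_algebraD[OF bm] by (intro emeasure_bind) (auto simp: sets_barP)
    also have "\<dots> = (\<integral>\<^sup>+k. ennreal (w k) * ennreal (J k k' / w k) \<partial>count_space K)"
      unfolding barPi_eq
      by (subst nn_integral_density) (auto intro!: nn_integral_cong simp: barP_eq dens_single k')
    also have "\<dots> = (\<integral>\<^sup>+k. ennreal (J k' k) \<partial>count_space K)"
    proof (intro nn_integral_cong)
      fix k assume "k \<in> space (count_space K)"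
      then have k: "k \<in> K" by simp
      have "ennreal (w k) * ennreal (J k k' / w k) = ennreal (w k * (J k k' / w k))"
        using w_pos[OF k] J_nonneg[of k k'] by (intro ennreal_mult[symmetric]) auto
      also have "w k * (J k k' / w k) = J k' k" using w_pos[OF k] by (simp add: J_sym)
      finally show "ennreal (w k) * ennreal (J k k' / w k) = ennreal (J k' k)" .
    qed
    also have "\<dots> = ennreal (w k')" by (rule J_rowsum[OF k'])
    also have "\<dots> = emeasure (barPi K Psi) {k'}"
      using k' by (simp add: barPi_eq dens_single)
    finally show "emeasure (barPi K Psi \<bind> barP K Psi P) {k'} = emeasure (barPi K Psi) {k'}" .
  qed
qed

lemma distr_fst: "x \<in> space PX \<Longrightarrow> distr (P x) (count_space K) fst = density (count_space K) (\<lambda>k. ennreal (p k x))"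
proof -
  assume x: "x \<in> space PX"
  have fm: "fst \<in> P x \<rightarrow>\<^sub>M count_space K" unfolding measurable_cong_sets[OF P_sets[OF x] refl] by (rule meas_fst)
  show ?thesis
  proof (rule sym, rule density_discrete[OF K(1)])
    show "sets (distr (P x) (count_space K) fst) = Pow K" by simp
    show "\<And>k. 0 \<le> ennreal (p k x)" by simp
    fix k assume k: "k \<in> K"
    have "fst -` {k} \<inter> space (P x) = B k"
      using sets_eq_imp_space_eq[OF P_sets[OF x]] k by (auto simp: B_def space_Pi Xspace_def)
    then show "ennreal (p k x) = emeasure (distr (P x) (count_space K) fst) {k}"
      using k by (simp add: emeasure_distr[OF fm] p_e[OF x])
  qed
qed

lemma fst_meas_P: "x \<in> space PX \<Longrightarrow> fst \<in> P x \<rightarrow>\<^sub>M count_space K"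
  unfolding measurable_cong_sets[OF P_sets refl] by (rule meas_fst)

lemma G_formula: "x \<in> space PX \<Longrightarrow> (\<integral>y. h (fst y) \<partial>P x) = (\<integral>k. p k x * h k \<partial>count_space K)"
proof -
  assume x: "x \<in> space PX"
  have "(\<integral>y. h (fst y) \<partial>P x) = (\<integral>k. h k \<partial>distr (P x) (count_space K) fst)"
    by (rule integral_distr[symmetric, OF fst_meas_P[OF x]]) simp
  also have "\<dots> = (\<integral>k. p k x * h k \<partial>count_space K)"
    unfolding distr_fst[OF x] by (subst integral_density) (auto simp: p_nonneg)
  finally show ?thesis .
qed

lemma G_formula_nn: "x \<in> space PX \<Longrightarrow> (\<integral>\<^sup>+y. h (fst y) \<partial>P x) = (\<integral>\<^sup>+k. ennreal (p k x) * h k \<partial>count_space K)"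
proof -
  assume x: "x \<in> space PX"
  have "(\<integral>\<^sup>+y. h (fst y) \<partial>P x) = (\<integral>\<^sup>+k. h k \<partial>distr (P x) (count_space K) fst)"
    by (rule nn_integral_distr[symmetric, OF fst_meas_P[OF x]]) simp
  also have "\<dots> = (\<integral>\<^sup>+k. ennreal (p k x) * h k \<partial>count_space K)"
    unfolding distr_fst[OF x] by (subst nn_integral_density) auto
  finally show ?thesis .
qed

lemma fub_KX:
  fixes F :: "'k \<Rightarrow> 'k \<times> 'z \<Rightarrow> real"
  assumes Fm: "\<And>k. k \<in> K \<Longrightarrow> F k \<in> borel_measurable PX"
    and bnd: "(\<integral>\<^sup>+x. \<integral>\<^sup>+k. ennreal (norm (F k x)) \<partial>count_space K \<partial>PX) < \<infinity>"
  shows "(\<integral>x. (\<integral>k. F k x \<partial>count_space K) \<partial>PX) = (\<integral>k. (\<integral>x. F k x \<partial>PX) \<partial>count_space K)"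
proof -
  interpret ps: pair_sigma_finite "count_space K" PX by (rule pairsf)
  have meas: "(\<lambda>(k, x). F k x) \<in> borel_measurable (count_space K \<Otimes>\<^sub>M PX)"
    by (rule measurable_pair_measure_countable1[OF K(1)]) (use Fm in simp)
  have meas2: "(\<lambda>(k, x). ennreal (norm (F k x))) \<in> borel_measurable (count_space K \<Otimes>\<^sub>M PX)"
    using meas by measurable
  have "integrable (count_space K \<Otimes>\<^sub>M PX) (\<lambda>(k, x). F k x)"
  proof (subst integrable_iff_bounded, intro conjI meas)
    have "(\<integral>\<^sup>+y. ennreal (norm (case y of (k, x) \<Rightarrow> F k x)) \<partial>(count_space K \<Otimes>\<^sub>M PX))
       = (\<integral>\<^sup>+x. \<integral>\<^sup>+k. ennreal (norm (F k x)) \<partial>count_space K \<partial>PX)"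
      using ps.nn_integral_snd[OF meas2] by (simp add: case_prod_beta')
    then show "(\<integral>\<^sup>+y. ennreal (norm (case y of (k, x) \<Rightarrow> F k x)) \<partial>(count_space K \<Otimes>\<^sub>M PX)) < \<infinity>"
      using bnd by simp
  qed
  from ps.Fubini_integral[OF this] show ?thesis by simp
qed

context
  fixes f :: "'k \<times> 'z \<Rightarrow> real"
  assumes fm: "f \<in> borel_measurable PX" and f2: "integrable PX (\<lambda>x. (f x)\<^sup>2)"
begin

lemma gL2: "integrable PX (\<lambda>x. (gm f x)\<^sup>2)" by (rule gm_L2[OF fm f2])
lemma gL1: "integrable PX (gm f)" by (rule gm_L1[OF fm f2])
lemma Gm[measurable]: "(\<lambda>x. \<integral>y. gm f y \<partial>P x) \<in> borel_measurable PX" by (rule mk.meas_Tf[OF mkP gm_meas])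
lemma GL2: "integrable PX (\<lambda>x. (\<integral>y. gm f y \<partial>P x)\<^sup>2)" by (rule mk.L2_contr(1)[OF mkP gm_meas gL2])

lemma nn_absg: "(\<integral>\<^sup>+x. \<integral>\<^sup>+y. ennreal \<bar>gm f y\<bar> \<partial>P x \<partial>PX) < \<infinity>"
proof -
  have "(\<integral>\<^sup>+x. \<integral>\<^sup>+y. ennreal \<bar>gm f y\<bar> \<partial>P x \<partial>PX) = (\<integral>\<^sup>+x. ennreal \<bar>gm f x\<bar> \<partial>PX)"
    by (rule mk.nn_inv[OF mkP]) measurable
  also have "\<dots> < \<infinity>" using gL1 by (simp add: integrable_iff_bounded)
  finally show ?thesis .
qed

lemma claimB:
  assumes k: "k \<in> K"
  shows "(\<integral>x. p k x * (\<integral>y. gm f y \<partial>P x) \<partial>PX) = (\<integral>k'. J k k' * mean f k' \<partial>count_space K)"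
proof -
  define F where "F k' x = p k x * (p k' x * mean f k')" for k' x
  have "(\<integral>x. p k x * (\<integral>y. gm f y \<partial>P x) \<partial>PX) = (\<integral>x. (\<integral>k'. F k' x \<partial>count_space K) \<partial>PX)"
  proof (rule Bochner_Integration.integral_cong[OF refl])
    fix x assume x: "x \<in> space PX"
    have "(\<integral>y. gm f y \<partial>P x) = (\<integral>k'. p k' x * mean f k' \<partial>count_space K)"
      unfolding gm_def by (rule G_formula[OF x])
    then show "p k x * (\<integral>y. gm f y \<partial>P x) = (\<integral>k'. F k' x \<partial>count_space K)"
      by (simp add: F_def)
  qed
  also have "\<dots> = (\<integral>k'. (\<integral>x. F k' x \<partial>PX) \<partial>count_space K)"
  proof (rule fub_KX)
    show "\<And>k'. k' \<in> K \<Longrightarrow> F k' \<in> borel_measurable PX" unfolding F_def using k by measurable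
    have "(\<integral>\<^sup>+x. \<integral>\<^sup>+k'. ennreal (norm (F k' x)) \<partial>count_space K \<partial>PX)
        \<le> (\<integral>\<^sup>+x. \<integral>\<^sup>+k'. ennreal (p k' x) * ennreal \<bar>mean f k'\<bar> \<partial>count_space K \<partial>PX)"
    proof (intro nn_integral_mono)
      fix x k' assume x: "x \<in> space PX"
      have "\<bar>F k' x\<bar> \<le> p k' x * \<bar>mean f k'\<bar>"
        using p_le1[OF x, of k] p_nonneg[of k x] p_nonneg[of k' x]
        by (simp add: F_def abs_mult mult_left_le_one_le mult_nonneg_nonneg)
      then show "ennreal (norm (F k' x)) \<le> ennreal (p k' x) * ennreal \<bar>mean f k'\<bar>"
        by (simp add: ennreal_mult[symmetric] p_nonneg)
    qed
    also have "\<dots> = (\<integral>\<^sup>+x. \<integral>\<^sup>+y. ennreal \<bar>gm f y\<bar> \<partial>P x \<partial>PX)"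
    proof (intro nn_integral_cong)
      fix x assume x: "x \<in> space PX"
      show "(\<integral>\<^sup>+k'. ennreal (p k' x) * ennreal \<bar>mean f k'\<bar> \<partial>count_space K) = (\<integral>\<^sup>+y. ennreal \<bar>gm f y\<bar> \<partial>P x)"
        using G_formula_nn[OF x, of "\<lambda>k. ennreal \<bar>mean f k\<bar>"] by (simp add: gm_def)
    qed
    also have "\<dots> < \<infinity>" by (rule nn_absg)
    finally show "(\<integral>\<^sup>+x. \<integral>\<^sup>+k'. ennreal (norm (F k' x)) \<partial>count_space K \<partial>PX) < \<infinity>" .
  qed
  also have "\<dots> = (\<integral>k'. J k k' * mean f k' \<partial>count_space K)"
  proof (rule Bochner_Integration.integral_cong[OF refl])
    fix k' assume "k' \<in> space (count_space K)"
    have "(\<integral>x. F k' x \<partial>PX) = (\<integral>x. p k x * p k' x * mean f k' \<partial>PX)" by (simp add: F_def mult.assoc)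
    also have "\<dots> = J k k' * mean f k'" unfolding J_def by simp
    finally show "(\<integral>x. F k' x \<partial>PX) = J k k' * mean f k'" .
  qed
  finally show ?thesis .
qed

lemma claimA:
  "(\<integral>x. (\<integral>y. gm f y \<partial>P x)\<^sup>2 \<partial>PX) = (\<integral>k. mean f k * (\<integral>x. p k x * (\<integral>y. gm f y \<partial>P x) \<partial>PX) \<partial>count_space K)"
proof -
  define G where "G x = (\<integral>y. gm f y \<partial>P x)" for x
  define F where "F k x = mean f k * (p k x * G x)" for k x
  have Gm': "G \<in> borel_measurable PX" unfolding G_def by (rule Gm)
  have "(\<integral>x. (G x)\<^sup>2 \<partial>PX) = (\<integral>x. (\<integral>k. F k x \<partial>count_space K) \<partial>PX)"
  proof (rule Bochner_Integration.integral_cong[OF refl])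
    fix x assume x: "x \<in> space PX"
    have "G x = (\<integral>k. p k x * mean f k \<partial>count_space K)" unfolding G_def gm_def by (rule G_formula[OF x])
    then have "(G x)\<^sup>2 = (\<integral>k. p k x * mean f k \<partial>count_space K) * G x" by (simp add: power2_eq_square)
    also have "\<dots> = (\<integral>k. F k x \<partial>count_space K)" by (simp add: F_def mult_ac)
    finally show "(G x)\<^sup>2 = (\<integral>k. F k x \<partial>count_space K)" .
  qed
  also have "\<dots> = (\<integral>k. (\<integral>x. F k x \<partial>PX) \<partial>count_space K)"
  proof (rule fub_KX)
    show "\<And>k. k \<in> K \<Longrightarrow> F k \<in> borel_measurable PX" unfolding F_def using Gm' by measurable
    define Hg where "Hg x = (\<integral>y. \<bar>gm f y\<bar> \<partial>P x)" for x
    have ae: "AE x in PX. (\<integral>\<^sup>+y. ennreal \<bar>gm f y\<bar> \<partial>P x) = ennreal (Hg x) \<and> (Hg x)\<^sup>2 \<le> (\<integral>y. (gm f y)\<^sup>2 \<partial>P x)"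
      using mk.AE_L2[OF mkP gm_meas gL2]
    proof (rule AE_mp, intro AE_I2 impI)
      fix x assume x: "x \<in> space PX" and i: "integrable (P x) (gm f) \<and> integrable (P x) (\<lambda>y. (gm f y)\<^sup>2)"
      have "(\<integral>\<^sup>+y. ennreal \<bar>gm f y\<bar> \<partial>P x) = ennreal (Hg x)"
        unfolding Hg_def by (rule nn_integral_eq_integral) (use i in auto)
      moreover have "(Hg x)\<^sup>2 \<le> (\<integral>y. (gm f y)\<^sup>2 \<partial>P x)"
        unfolding Hg_def using prob_sq_le[OF P_prob[OF x], of "\<lambda>y. \<bar>gm f y\<bar>"] i by simp
      ultimately show "(\<integral>\<^sup>+y. ennreal \<bar>gm f y\<bar> \<partial>P x) = ennreal (Hg x) \<and> (Hg x)\<^sup>2 \<le> (\<integral>y. (gm f y)\<^sup>2 \<partial>P x)" by simp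
    qed
    have I2: "integrable PX (\<lambda>x. \<integral>y. (gm f y)\<^sup>2 \<partial>P x)" by (rule mk.integrable_T_nonneg[OF mkP gL2]) simp
    have GL2': "integrable PX (\<lambda>x. (G x)\<^sup>2)" unfolding G_def by (rule GL2)
    have "(\<integral>\<^sup>+x. \<integral>\<^sup>+k. ennreal (norm (F k x)) \<partial>count_space K \<partial>PX)
        = (\<integral>\<^sup>+x. ennreal \<bar>G x\<bar> * (\<integral>\<^sup>+k. ennreal (p k x) * ennreal \<bar>mean f k\<bar> \<partial>count_space K) \<partial>PX)"
    proof (intro nn_integral_cong)
      fix x assume x: "x \<in> space PX"
      have "(\<integral>\<^sup>+k. ennreal (norm (F k x)) \<partial>count_space K)
          = (\<integral>\<^sup>+k. ennreal \<bar>G x\<bar> * (ennreal (p k x) * ennreal \<bar>mean f k\<bar>) \<partial>count_space K)"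
        by (intro nn_integral_cong) (simp add: F_def abs_mult p_nonneg ennreal_mult[symmetric] mult_ac)
      also have "\<dots> = ennreal \<bar>G x\<bar> * (\<integral>\<^sup>+k. ennreal (p k x) * ennreal \<bar>mean f k\<bar> \<partial>count_space K)"
        by (rule nn_integral_cmult) simp
      finally show "(\<integral>\<^sup>+k. ennreal (norm (F k x)) \<partial>count_space K)
          = ennreal \<bar>G x\<bar> * (\<integral>\<^sup>+k. ennreal (p k x) * ennreal \<bar>mean f k\<bar> \<partial>count_space K)" .
    qed
    also have "\<dots> = (\<integral>\<^sup>+x. ennreal \<bar>G x\<bar> * (\<integral>\<^sup>+y. ennreal \<bar>gm f y\<bar> \<partial>P x) \<partial>PX)"
    proof (intro nn_integral_cong)
      fix x assume x: "x \<in> space PX"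
      show "ennreal \<bar>G x\<bar> * (\<integral>\<^sup>+k. ennreal (p k x) * ennreal \<bar>mean f k\<bar> \<partial>count_space K) = ennreal \<bar>G x\<bar> * (\<integral>\<^sup>+y. ennreal \<bar>gm f y\<bar> \<partial>P x)"
        using G_formula_nn[OF x, of "\<lambda>k. ennreal \<bar>mean f k\<bar>"] by (simp add: gm_def)
    qed
    also have "\<dots> \<le> (\<integral>\<^sup>+x. ennreal (((G x)\<^sup>2 + (\<integral>y. (gm f y)\<^sup>2 \<partial>P x)) / 2) \<partial>PX)"
    proof (rule nn_integral_mono_AE)
      show "AE x in PX. ennreal \<bar>G x\<bar> * (\<integral>\<^sup>+y. ennreal \<bar>gm f y\<bar> \<partial>P x) \<le> ennreal (((G x)\<^sup>2 + (\<integral>y. (gm f y)\<^sup>2 \<partial>P x)) / 2)"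
        using ae
      proof (rule AE_mp, intro AE_I2 impI)
        fix x assume x: "x \<in> space PX"
          and a: "(\<integral>\<^sup>+y. ennreal \<bar>gm f y\<bar> \<partial>P x) = ennreal (Hg x) \<and> (Hg x)\<^sup>2 \<le> (\<integral>y. (gm f y)\<^sup>2 \<partial>P x)"
        have Hn: "0 \<le> Hg x" unfolding Hg_def by simp
        have "\<bar>G x\<bar> * Hg x \<le> ((G x)\<^sup>2 + (Hg x)\<^sup>2) / 2" using abs_le_amgm[of "G x" "Hg x"] Hn by simp
        also have "\<dots> \<le> ((G x)\<^sup>2 + (\<integral>y. (gm f y)\<^sup>2 \<partial>P x)) / 2" using a by simp
        finally have "\<bar>G x\<bar> * Hg x \<le> ((G x)\<^sup>2 + (\<integral>y. (gm f y)\<^sup>2 \<partial>P x)) / 2" .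
        then show "ennreal \<bar>G x\<bar> * (\<integral>\<^sup>+y. ennreal \<bar>gm f y\<bar> \<partial>P x) \<le> ennreal (((G x)\<^sup>2 + (\<integral>y. (gm f y)\<^sup>2 \<partial>P x)) / 2)"
          using a Hn by (simp add: ennreal_mult[symmetric])
      qed
    qed
    also have "\<dots> < \<infinity>"
    proof -
      have "integrable PX (\<lambda>x. ((G x)\<^sup>2 + (\<integral>y. (gm f y)\<^sup>2 \<partial>P x)) / 2)" using GL2' I2 by simp
      then have "(\<integral>\<^sup>+x. ennreal (norm (((G x)\<^sup>2 + (\<integral>y. (gm f y)\<^sup>2 \<partial>P x)) / 2)) \<partial>PX) < \<infinity>"
        by (simp add: integrable_iff_bounded)
      moreover have "(\<integral>\<^sup>+x. ennreal (((G x)\<^sup>2 + (\<integral>y. (gm f y)\<^sup>2 \<partial>P x)) / 2) \<partial>PX)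
          \<le> (\<integral>\<^sup>+x. ennreal (norm (((G x)\<^sup>2 + (\<integral>y. (gm f y)\<^sup>2 \<partial>P x)) / 2)) \<partial>PX)"
        by (intro nn_integral_mono) simp
      ultimately show ?thesis by (meson le_less_trans)
    qed
    finally show "(\<integral>\<^sup>+x. \<integral>\<^sup>+k. ennreal (norm (F k x)) \<partial>count_space K \<partial>PX) < \<infinity>" .
  qed
  also have "\<dots> = (\<integral>k. mean f k * (\<integral>x. p k x * G x \<partial>PX) \<partial>count_space K)"
    by (simp add: F_def)
  finally show ?thesis unfolding G_def .
qed

end

lemma barP_act: "k \<in> K \<Longrightarrow> (\<integral>k'. h k' \<partial>barP K Psi P k) = (\<integral>k'. J k k' * h k' \<partial>count_space K) / w k"
proof -
  assume k: "k \<in> K"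
  have "(\<integral>k'. h k' \<partial>barP K Psi P k) = (\<integral>k'. (J k k' / w k) * h k' \<partial>count_space K)"
    unfolding barP_eq[OF k] by (subst integral_density) (auto simp: J_nonneg w_pos[OF k] less_imp_le)
  also have "\<dots> = (\<integral>k'. J k k' * h k' / w k \<partial>count_space K)" by (simp add: mult.commute)
  also have "\<dots> = (\<integral>k'. J k k' * h k' \<partial>count_space K) / w k" by simp
  finally show ?thesis .
qed

lemma w_nonneg: "0 \<le> w k" by (simp add: w_def)

lemma barPi_int: "(\<integral>k. h k \<partial>barPi K Psi) = (\<integral>k. w k * h k \<partial>count_space K)"
  unfolding barPi_eq by (subst integral_density) (auto simp: w_nonneg)

lemma barPi_integrable: "integrable (barPi K Psi) h \<longleftrightarrow> integrable (count_space K) (\<lambda>k. w k * h k)"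
  unfolding barPi_eq by (subst integrable_density) (auto simp: w_nonneg)

context
  fixes f :: "'k \<times> 'z \<Rightarrow> real"
  assumes fm: "f \<in> borel_measurable PX" and f2: "integrable PX (\<lambda>x. (f x)\<^sup>2)" and f0: "(\<integral>x. f x \<partial>PX) = 0"
begin

lemma ident: "(\<integral>x. (\<integral>y. gm f y \<partial>P x)\<^sup>2 \<partial>PX)
    = (\<integral>k. mean f k * (\<integral>k'. mean f k' \<partial>barP K Psi P k) \<partial>barPi K Psi)"
proof -
  have "(\<integral>k. mean f k * (\<integral>k'. mean f k' \<partial>barP K Psi P k) \<partial>barPi K Psi)
      = (\<integral>k. w k * (mean f k * (\<integral>k'. mean f k' \<partial>barP K Psi P k)) \<partial>count_space K)"
    by (rule barPi_int)
  also have "\<dots> = (\<integral>k. mean f k * (\<integral>x. p k x * (\<integral>y. gm f y \<partial>P x) \<partial>PX) \<partial>count_space K)"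
  proof (rule Bochner_Integration.integral_cong[OF refl])
    fix k assume "k \<in> space (count_space K)"
    then have k: "k \<in> K" by simp
    have "w k * (mean f k * (\<integral>k'. mean f k' \<partial>barP K Psi P k))
        = mean f k * (\<integral>k'. J k k' * mean f k' \<partial>count_space K)"
      using w_pos[OF k] by (simp add: barP_act[OF k])
    also have "\<dots> = mean f k * (\<integral>x. p k x * (\<integral>y. gm f y \<partial>P x) \<partial>PX)"
      by (simp add: claimB[OF fm f2 k])
    finally show "w k * (mean f k * (\<integral>k'. mean f k' \<partial>barP K Psi P k))
        = mean f k * (\<integral>x. p k x * (\<integral>y. gm f y \<partial>P x) \<partial>PX)" .
  qed
  also have "\<dots> = (\<integral>x. (\<integral>y. gm f y \<partial>P x)\<^sup>2 \<partial>PX)" by (rule claimA[OF fm f2, symmetric])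
  finally show ?thesis ..
qed

lemma m_meas: "mean f \<in> borel_measurable (barPi K Psi)"
  unfolding measurable_cong_sets[OF sets_barPi[unfolded sets_count_space[of K, symmetric]] refl] by simp

lemma m2_int: "integrable (barPi K Psi) (\<lambda>k. (mean f k)\<^sup>2)"
proof -
  have "integrable (count_space K) (\<lambda>k. w k * (\<integral>z. (gm f (k, z))\<^sup>2 \<partial>Phi k))"
    using int_Pi(1)[OF gm_L2[OF fm f2]] .
  then have "integrable (count_space K) (\<lambda>k. w k * (mean f k)\<^sup>2)"
    by (rule Bochner_Integration.integrable_cong[THEN iffD1, OF refl, rotated]) (simp add: gm_def Phi_meas1)
  then show ?thesis by (simp add: barPi_integrable)
qed

lemma m0: "(\<integral>k. mean f k \<partial>barPi K Psi) = 0"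
  using f_int[OF fm f2] f0 by (simp add: barPi_int)

lemma m2eq: "(\<integral>k. (mean f k)\<^sup>2 \<partial>barPi K Psi) = (\<integral>x. (gm f x)\<^sup>2 \<partial>PX)"
  using gm_sq[OF fm f2] by (simp add: barPi_int)

lemma between_P: "(\<integral>x. (\<integral>y. gm f y \<partial>P x)\<^sup>2 \<partial>PX) \<le> lambda1 K Psi P * (\<integral>x. (gm f x)\<^sup>2 \<partial>PX)"
proof -
  define \<mu> where "\<mu> = barPi K Psi"
  define h where "h k = (\<integral>k'. mean f k' \<partial>barP K Psi P k)" for k
  define l where "l = lambda1 K Psi P"
  have mkb: "mk \<mu> (barP K Psi P)" unfolding \<mu>_def by (rule mk_bar)
  have l_eq: "l = opnorm \<mu> (barP K Psi P)" by (simp add: l_def lambda1_def \<mu>_def)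
  have l0: "0 \<le> l" unfolding l_eq by (rule mk.opnorm_nonneg[OF mkb])
  have mm: "mean f \<in> borel_measurable \<mu>" unfolding \<mu>_def by (rule m_meas)
  have m2: "integrable \<mu> (\<lambda>k. (mean f k)\<^sup>2)" unfolding \<mu>_def by (rule m2_int)
  have hb: "(\<integral>k. (h k)\<^sup>2 \<partial>\<mu>) \<le> l\<^sup>2 * (\<integral>k. (mean f k)\<^sup>2 \<partial>\<mu>)"
    unfolding h_def l_eq using mk.opnorm_bound[OF mkb mm m2] m0 by (simp add: \<mu>_def)
  have h2: "integrable \<mu> (\<lambda>k. (h k)\<^sup>2)" unfolding h_def using mk.L2_contr(1)[OF mkb mm m2] .
  have hm: "h \<in> borel_measurable \<mu>" unfolding h_def using mk.meas_Tf[OF mkb mm] .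
  have mh: "integrable \<mu> (\<lambda>k. mean f k * h k)"
  proof (rule Bochner_Integration.integrable_bound[OF Bochner_Integration.integrable_add[OF m2 h2]])
    show "(\<lambda>k. mean f k * h k) \<in> borel_measurable \<mu>" using mm hm by measurable
    show "AE k in \<mu>. norm (mean f k * h k) \<le> norm ((mean f k)\<^sup>2 + (h k)\<^sup>2)"
    proof (intro AE_I2)
      fix k
      have "\<bar>mean f k * h k\<bar> \<le> ((mean f k)\<^sup>2 + (h k)\<^sup>2) / 2"
        using abs_le_amgm[of "mean f k" "h k"] by (simp add: abs_mult)
      moreover have "0 \<le> (mean f k)\<^sup>2 + (h k)\<^sup>2" by simp
      ultimately show "norm (mean f k * h k) \<le> norm ((mean f k)\<^sup>2 + (h k)\<^sup>2)" by simp
    qed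
  qed
  have X: "(\<integral>k. mean f k * h k \<partial>\<mu>) \<le> (s * (\<integral>k. (mean f k)\<^sup>2 \<partial>\<mu>) + (\<integral>k. (h k)\<^sup>2 \<partial>\<mu>) / s) / 2"
    if s: "0 < s" for s
  proof -
    have "(\<integral>k. mean f k * h k \<partial>\<mu>) \<le> (\<integral>k. (s * (mean f k)\<^sup>2 + (h k)\<^sup>2 / s) / 2 \<partial>\<mu>)"
    proof (rule integral_mono[OF mh])
      show "integrable \<mu> (\<lambda>k. (s * (mean f k)\<^sup>2 + (h k)\<^sup>2 / s) / 2)" using m2 h2 by simp
      show "\<And>k. k \<in> space \<mu> \<Longrightarrow> mean f k * h k \<le> (s * (mean f k)\<^sup>2 + (h k)\<^sup>2 / s) / 2"
        using amgm[OF s] by blast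
    qed
    also have "\<dots> = (s * (\<integral>k. (mean f k)\<^sup>2 \<partial>\<mu>) + (\<integral>k. (h k)\<^sup>2 \<partial>\<mu>) / s) / 2"
      using m2 h2 by simp
    finally show ?thesis .
  qed
  have A0: "0 \<le> (\<integral>k. (mean f k)\<^sup>2 \<partial>\<mu>)" by simp
  have "(\<integral>k. mean f k * h k \<partial>\<mu>) \<le> l * (\<integral>k. (mean f k)\<^sup>2 \<partial>\<mu>)"
    by (rule cs_aux[OF X A0 hb l0])
  then show ?thesis using ident m2eq by (simp add: \<mu>_def h_def l_def)
qed


lemma between_Q: "(\<integral>x. (\<integral>y. gm f y \<partial>Q x)\<^sup>2 \<partial>PX) \<le> lambda1 K Psi P * (\<integral>x. (gm f x)\<^sup>2 \<partial>PX)"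
proof -
  define R where "R = kpow PX P (t - 1)"
  have mkR: "mk PX R" unfolding R_def by (rule mk.mk_kpow[OF mkP])
  have tS: "t = Suc (t - 1)" using t_pos by simp
  have Qb: "Q x = bind (R x) P" if x: "x \<in> space PX" for x
    unfolding Q_def R_def by (subst tS) (rule mk.kpow_Suc'[OF mkP x])
  have ae: "AE x in PX. (\<integral>y. gm f y \<partial>Q x) = (\<integral>y. (\<integral>z. gm f z \<partial>P y) \<partial>R x)"
    using mk.AE_integrable[OF mkQ gL1[OF fm f2]]
  proof (rule AE_mp, intro AE_I2 impI)
    fix x assume x: "x \<in> space PX" and i: "integrable (Q x) (gm f)"
    have Rp: "prob_space (R x)" by (rule mk.T_prob[OF mkR x])
    have PR: "P \<in> R x \<rightarrow>\<^sub>M prob_algebra PX"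
      unfolding measurable_cong_sets[OF mk.T_sets[OF mkR x] refl] by (rule P_kernel)
    show "(\<integral>y. gm f y \<partial>Q x) = (\<integral>y. (\<integral>z. gm f z \<partial>P y) \<partial>R x)"
      using bind_int(2)[OF Rp PR] i Qb[OF x] by simp
  qed
  have "(\<integral>x. (\<integral>y. gm f y \<partial>Q x)\<^sup>2 \<partial>PX) = (\<integral>x. (\<integral>y. (\<integral>z. gm f z \<partial>P y) \<partial>R x)\<^sup>2 \<partial>PX)"
  proof (rule integral_cong_AE)
    show "(\<lambda>x. (\<integral>y. gm f y \<partial>Q x)\<^sup>2) \<in> borel_measurable PX"
      using mk.meas_Tf[OF mkQ gm_meas] by measurable
    show "(\<lambda>x. (\<integral>y. (\<integral>z. gm f z \<partial>P y) \<partial>R x)\<^sup>2) \<in> borel_measurable PX"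
      using mk.meas_Tf[OF mkR Gm[OF fm f2]] by measurable
  qed (use ae in auto)
  also have "\<dots> \<le> (\<integral>x. (\<integral>y. gm f y \<partial>P x)\<^sup>2 \<partial>PX)"
    by (rule mk.L2_contr(2)[OF mkR Gm[OF fm f2] GL2[OF fm f2]])
  also have "\<dots> \<le> lambda1 K Psi P * (\<integral>x. (gm f x)\<^sup>2 \<partial>PX)" by (rule between_P)
  finally show ?thesis .
qed

end

end



lemma real_final:
  fixes al la rho ep s nf r C qg ta :: real
  assumes al: "0 \<le> al" "al \<le> 1" and la: "0 \<le> la" and rho: "0 \<le> rho" "rho \<le> 1"
    and ep: "0 < ep" "ep \<le> 1" and ta: "ta = sqrt ep"
    and s: "0 \<le> s" "s \<le> nf" "nf \<le> 1" and qg: "0 \<le> qg" "qg \<le> la * s"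
    and r1: "rho - ep \<le> r" and r2: "r \<le> (1 - al) * nf + al * s" and r3: "r \<le> rho * nf"
    and D: "r - 2 * ta * C + ta\<^sup>2 * qg \<le> rho * (nf - 2 * ta * s + ta\<^sup>2 * s)"
    and AM: "\<And>sg. 0 < sg \<Longrightarrow> C \<le> (sg * r + qg / sg) / 2"
  shows "al * (1 - la) \<le> 1 - rho\<^sup>2 + ep + 3 * sqrt ep"
proof (cases "rho = 0")
  case True
  have "al * (1 - la) \<le> al * 1" using al la by (intro mult_left_mono) auto
  also have "\<dots> \<le> 1" using al by simp
  finally have "al * (1 - la) \<le> 1" .
  moreover have "0 \<le> sqrt ep" using ep by simp
  moreover have "rho\<^sup>2 = 0" using True by simp
  ultimately show ?thesis using ep by linarith
next
  case False
  then have rp: "0 < rho" using rho by simp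
  have tp: "0 < ta" using ta ep by simp
  have t2: "ta\<^sup>2 = ep" using ta ep by simp
  have rs1: "rho * s \<le> 1" using rho s by (metis mult_le_one order_trans)
  have "2 * ta * C \<ge> r - rho * nf + 2 * ta * rho * s - ta\<^sup>2 * rho * s + ta\<^sup>2 * qg"
    using D by (simp add: algebra_simps)
  moreover have "ta\<^sup>2 * qg \<ge> 0" using qg by simp
  moreover have "rho * nf \<le> rho" using rho s by (simp add: mult_left_le)
  ultimately have "2 * ta * C \<ge> - ep + 2 * ta * rho * s - ep * rho * s" using r1 t2 by simp
  moreover have "ep * rho * s \<le> ep" using rs1 ep by (simp add: mult.assoc mult_left_le)
  moreover have "2 * ta * rho * s = 2 * ta * (rho * s)" by (simp add: mult.assoc)
  ultimately have "2 * ta * C \<ge> 2 * ta * (rho * s) - ep - ep" by linarith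
  moreover have "ep + ep = 2 * ta * ta" using t2 by (simp add: power2_eq_square)
  ultimately have "2 * ta * (rho * s - ta) \<le> 2 * ta * C" by (simp add: right_diff_distrib)
  then have Clow: "rho * s - ta \<le> C" using tp by (simp add: mult_le_cancel_left_pos)
  define sg where "sg = (la + ta) / rho"
  have sgp: "0 < sg" unfolding sg_def using la tp rp by simp
  have "C \<le> (sg * r + qg / sg) / 2" by (rule AM[OF sgp])
  also have "sg * r \<le> la + ta"
  proof -
    have "sg * r \<le> sg * (rho * nf)" using r3 sgp by simp
    also have "\<dots> \<le> sg * rho" using sgp rho s by (simp add: mult_left_le)
    also have "\<dots> = la + ta" unfolding sg_def using rp by simp
    finally show ?thesis .
  qed
  also have "qg / sg \<le> rho * s"
  proof -
    have "qg / sg = qg * rho / (la + ta)" unfolding sg_def using rp tp la by (simp add: field_simps)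
    also have "\<dots> \<le> la * s * rho / (la + ta)" using qg rho la tp by (intro divide_right_mono mult_right_mono) auto
    also have "\<dots> = (la / (la + ta)) * (rho * s)" by (simp add: field_simps)
    also have "\<dots> \<le> 1 * (rho * s)" using la tp rho s by (intro mult_right_mono) auto
    finally show ?thesis by simp
  qed
  finally have "C \<le> (la + ta + rho * s) / 2" by simp
  with Clow have rsl: "rho * s \<le> la + 3 * ta" by simp
  have st: "al * (1 - s) \<le> 1 - rho + ep"
  proof -
    have "rho - ep \<le> (1 - al) * nf + al * s" using r1 r2 by simp
    also have "(1 - al) * nf \<le> 1 - al" using al s by (simp add: mult_left_le)
    finally show ?thesis by (simp add: algebra_simps)
  qed
  have "al * (1 - la) = al * (1 - rho * s) + al * (rho * s - la)" by (simp add: algebra_simps)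
  also have "al * (rho * s - la) \<le> al * (3 * ta)" using rsl al by (intro mult_left_mono) auto
  also have "al * (3 * ta) \<le> 3 * ta" using al tp by (simp add: mult_left_le_one_le)
  also have "al * (1 - rho * s) = al * (1 - rho) + rho * (al * (1 - s))" by (simp add: algebra_simps)
  also have "rho * (al * (1 - s)) \<le> rho * (1 - rho + ep)" using st rho by (intro mult_left_mono) auto
  also have "al * (1 - rho) \<le> 1 * (1 - rho)" using al rho by (intro mult_right_mono) auto
  finally have "al * (1 - la) \<le> (1 - rho) + rho * (1 - rho + ep) + 3 * ta" by simp
  also have "\<dots> = 1 - rho\<^sup>2 + rho * ep + 3 * ta" by (simp add: power2_eq_square algebra_simps)
  also have "rho * ep \<le> ep" using rho ep by (simp add: mult_left_le_one_le)
  finally show ?thesis using ta by simp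
qed


context thm5
begin

lemma approx_ineq:
  assumes ep: "0 < ep" "ep \<le> 1"
  shows "a * (1 - b\<^sup>2) * (1 - lambda1 K Psi P) \<le> 1 - ((opnorm PX Q)\<^sup>2)\<^sup>2 + ep + 3 * sqrt ep"
proof -
  define rho where "rho = (opnorm PX Q)\<^sup>2"
  obtain f :: "'k \<times> 'z \<Rightarrow> real" where fm: "f \<in> borel_measurable PX" and f2: "integrable PX (\<lambda>x. (f x)\<^sup>2)"
    and f0: "(\<integral>x. f x \<partial>PX) = 0" and fn: "(\<integral>x. (f x)\<^sup>2 \<partial>PX) \<le> 1"
    and fa: "(opnorm PX Q)\<^sup>2 - ep \<le> (\<integral>x. (\<integral>y. f y \<partial>Q x)\<^sup>2 \<partial>PX)"
    using mk.opnorm_approx[OF mkQ ep(1)] by blast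
  define g :: "'k \<times> 'z \<Rightarrow> real" where "g = gm f"
  define ta where "ta = sqrt ep"
  define nf where "nf = (\<integral>x. (f x)\<^sup>2 \<partial>PX)"
  define s where "s = (\<integral>x. (g x)\<^sup>2 \<partial>PX)"
  define r where "r = (\<integral>x. (\<integral>y. f y \<partial>Q x)\<^sup>2 \<partial>PX)"
  define qg where "qg = (\<integral>x. (\<integral>y. g y \<partial>Q x)\<^sup>2 \<partial>PX)"
  define C where "C = (\<integral>x. (\<integral>y. f y \<partial>Q x) * (\<integral>y. g y \<partial>Q x) \<partial>PX)"
  define al where "al = a * (1 - b\<^sup>2)"
  define la where "la = lambda1 K Psi P"
  have gm': "g \<in> borel_measurable PX" unfolding g_def by (rule gm_meas)
  have g2: "integrable PX (\<lambda>x. (g x)\<^sup>2)" unfolding g_def by (rule gm_L2[OF fm f2])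
  have g1: "integrable PX g" unfolding g_def by (rule gm_L1[OF fm f2])
  have f1: "integrable PX f" by (rule f_L1[OF fm f2])
  have fg: "integrable PX (\<lambda>x. f x * g x)" unfolding g_def by (rule cross_L1[OF fm f2])
  have fgi: "(\<integral>x. f x * g x \<partial>PX) = s" unfolding g_def s_def by (rule cross_int[OF fm f2])
  have wi: "(\<integral>x. (f x - g x)\<^sup>2 \<partial>PX) = nf - s" unfolding g_def nf_def s_def by (rule within_int[OF fm f2])
  have s0: "0 \<le> s" unfolding s_def by simp
  have snf: "s \<le> nf" using wi integral_nonneg_AE[of "\<lambda>x. (f x - g x)\<^sup>2" PX] by simp
  have nf1: "nf \<le> 1" using fn by (simp add: nf_def)
  have qg0: "0 \<le> qg" unfolding qg_def by simp
  have la0: "0 \<le> la" unfolding la_def lambda1_def by (rule mk.opnorm_nonneg[OF mk_bar])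
  have qgl: "qg \<le> la * s" unfolding qg_def la_def s_def g_def by (rule between_Q[OF fm f2 f0])
  have al0: "0 \<le> al" unfolding al_def using a_nonneg b_le1 b_nonneg by (simp add: power_le_one)
  have al1: "al \<le> 1"
  proof -
    have "1 - b\<^sup>2 \<le> 1" by simp
    moreover have "0 \<le> 1 - b\<^sup>2" using b_le1 b_nonneg by (simp add: power_le_one)
    ultimately show ?thesis unfolding al_def using a_nonneg a_le1 by (intro mult_le_one) auto
  qed
  have rho0: "0 \<le> rho" unfolding rho_def by simp
  have rho1: "rho \<le> 1" unfolding rho_def using mk.opnorm_nonneg[OF mkQ] mk.opnorm_le1[OF mkQ] by (simp add: power_le_one)
  have r1: "rho - ep \<le> r" using fa by (simp add: rho_def r_def)
  have r2: "r \<le> (1 - al) * nf + al * s"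
  proof -
    have "a * (1 - b\<^sup>2) * (nf - s) \<le> nf - r"
      using within_bound[OF fm f2] wi by (simp add: g_def nf_def r_def)
    then show ?thesis by (simp add: al_def algebra_simps)
  qed
  have r3: "r \<le> rho * nf" unfolding r_def rho_def nf_def by (rule mk.opnorm_bound[OF mkQ fm f2 f0])
  have Qf2: "integrable PX (\<lambda>x. (\<integral>y. f y \<partial>Q x)\<^sup>2)" by (rule mk.L2_contr(1)[OF mkQ fm f2])
  have Qg2: "integrable PX (\<lambda>x. (\<integral>y. g y \<partial>Q x)\<^sup>2)" by (rule mk.L2_contr(1)[OF mkQ gm' g2])
  have Qfm: "(\<lambda>x. \<integral>y. f y \<partial>Q x) \<in> borel_measurable PX" by (rule mk.meas_Tf[OF mkQ fm])
  have Qgm: "(\<lambda>x. \<integral>y. g y \<partial>Q x) \<in> borel_measurable PX" by (rule mk.meas_Tf[OF mkQ gm'])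
  have QfQg: "integrable PX (\<lambda>x. (\<integral>y. f y \<partial>Q x) * (\<integral>y. g y \<partial>Q x))"
  proof (rule Bochner_Integration.integrable_bound[OF Bochner_Integration.integrable_add[OF Qf2 Qg2]])
    show "(\<lambda>x. (\<integral>y. f y \<partial>Q x) * (\<integral>y. g y \<partial>Q x)) \<in> borel_measurable PX" using Qfm Qgm by measurable
    show "AE x in PX. norm ((\<integral>y. f y \<partial>Q x) * (\<integral>y. g y \<partial>Q x)) \<le> norm ((\<integral>y. f y \<partial>Q x)\<^sup>2 + (\<integral>y. g y \<partial>Q x)\<^sup>2)"
    proof (intro AE_I2)
      fix x
      have "\<bar>(\<integral>y. f y \<partial>Q x) * (\<integral>y. g y \<partial>Q x)\<bar> \<le> ((\<integral>y. f y \<partial>Q x)\<^sup>2 + (\<integral>y. g y \<partial>Q x)\<^sup>2) / 2"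
        using abs_le_amgm by (simp add: abs_mult)
      moreover have "0 \<le> (\<integral>y. f y \<partial>Q x)\<^sup>2 + (\<integral>y. g y \<partial>Q x)\<^sup>2" by simp
      ultimately show "norm ((\<integral>y. f y \<partial>Q x) * (\<integral>y. g y \<partial>Q x)) \<le> norm ((\<integral>y. f y \<partial>Q x)\<^sup>2 + (\<integral>y. g y \<partial>Q x)\<^sup>2)"
        by simp
    qed
  qed
  have AM: "C \<le> (sg * r + qg / sg) / 2" if sg: "0 < sg" for sg
  proof -
    have "C \<le> (\<integral>x. (sg * (\<integral>y. f y \<partial>Q x)\<^sup>2 + (\<integral>y. g y \<partial>Q x)\<^sup>2 / sg) / 2 \<partial>PX)"
      unfolding C_def
    proof (rule integral_mono[OF QfQg])
      show "integrable PX (\<lambda>x. (sg * (\<integral>y. f y \<partial>Q x)\<^sup>2 + (\<integral>y. g y \<partial>Q x)\<^sup>2 / sg) / 2)" using Qf2 Qg2 by simp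
      show "\<And>x. x \<in> space PX \<Longrightarrow> (\<integral>y. f y \<partial>Q x) * (\<integral>y. g y \<partial>Q x)
           \<le> (sg * (\<integral>y. f y \<partial>Q x)\<^sup>2 + (\<integral>y. g y \<partial>Q x)\<^sup>2 / sg) / 2"
        using amgm[OF sg] by blast
    qed
    also have "\<dots> = (sg * r + qg / sg) / 2" using Qf2 Qg2 by (simp add: r_def qg_def)
    finally show ?thesis .
  qed
  define v where "v x = f x - ta * g x" for x
  have vm: "v \<in> borel_measurable PX" unfolding v_def using fm gm' by measurable
  have v2e: "(\<lambda>x. (v x)\<^sup>2) = (\<lambda>x. (f x)\<^sup>2 - 2 * ta * (f x * g x) + ta\<^sup>2 * (g x)\<^sup>2)"
    by (auto simp: fun_eq_iff v_def power2_diff power_mult_distrib algebra_simps)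
  have v2: "integrable PX (\<lambda>x. (v x)\<^sup>2)" unfolding v2e using f2 fg g2 by simp
  have v0: "(\<integral>x. v x \<partial>PX) = 0"
    unfolding v_def using f1 g1 f0 gm_int[OF fm f2] by (simp add: g_def)
  have vn: "(\<integral>x. (v x)\<^sup>2 \<partial>PX) = nf - 2 * ta * s + ta\<^sup>2 * s"
    unfolding v2e using f2 fg g2 fgi by (simp add: nf_def s_def)
  have aeQ: "AE x in PX. (\<integral>y. v y \<partial>Q x) = (\<integral>y. f y \<partial>Q x) - ta * (\<integral>y. g y \<partial>Q x)"
    using mk.AE_integrable[OF mkQ f1] mk.AE_integrable[OF mkQ g1]
    by eventually_elim (simp add: v_def)
  have Qv: "(\<integral>x. (\<integral>y. v y \<partial>Q x)\<^sup>2 \<partial>PX) = r - 2 * ta * C + ta\<^sup>2 * qg"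
  proof -
    have "(\<integral>x. (\<integral>y. v y \<partial>Q x)\<^sup>2 \<partial>PX) = (\<integral>x. ((\<integral>y. f y \<partial>Q x) - ta * (\<integral>y. g y \<partial>Q x))\<^sup>2 \<partial>PX)"
    proof (rule integral_cong_AE)
      show "(\<lambda>x. (\<integral>y. v y \<partial>Q x)\<^sup>2) \<in> borel_measurable PX" using mk.meas_Tf[OF mkQ vm] by measurable
      show "(\<lambda>x. ((\<integral>y. f y \<partial>Q x) - ta * (\<integral>y. g y \<partial>Q x))\<^sup>2) \<in> borel_measurable PX" using Qfm Qgm by measurable
    qed (use aeQ in auto)
    also have "(\<lambda>x. ((\<integral>y. f y \<partial>Q x) - ta * (\<integral>y. g y \<partial>Q x))\<^sup>2)
        = (\<lambda>x. (\<integral>y. f y \<partial>Q x)\<^sup>2 - 2 * ta * ((\<integral>y. f y \<partial>Q x) * (\<integral>y. g y \<partial>Q x)) + ta\<^sup>2 * (\<integral>y. g y \<partial>Q x)\<^sup>2)"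
      by (auto simp: fun_eq_iff power2_diff power_mult_distrib algebra_simps)
    also have "(\<integral>x. (\<integral>y. f y \<partial>Q x)\<^sup>2 - 2 * ta * ((\<integral>y. f y \<partial>Q x) * (\<integral>y. g y \<partial>Q x)) + ta\<^sup>2 * (\<integral>y. g y \<partial>Q x)\<^sup>2 \<partial>PX)
        = r - 2 * ta * C + ta\<^sup>2 * qg"
      using Qf2 QfQg Qg2 by (simp add: r_def C_def qg_def)
    finally show ?thesis .
  qed
  have D: "r - 2 * ta * C + ta\<^sup>2 * qg \<le> rho * (nf - 2 * ta * s + ta\<^sup>2 * s)"
    using mk.opnorm_bound[OF mkQ vm v2 v0] unfolding Qv vn rho_def .
  have "al * (1 - la) \<le> 1 - rho\<^sup>2 + ep + 3 * sqrt ep"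
    by (rule real_final[OF al0 al1 la0 rho0 rho1 ep ta_def s0 snf nf1 qg0 qgl r1 r2 r3 D AM])
  then show ?thesis by (simp add: al_def la_def rho_def)
qed


lemma final:
  "1 - (opnorm PX Q) ^ 4 \<ge> a\<^sup>2 * (1 - b\<^sup>2) * (1 - lambda1 K Psi P)"
proof -
  define N where "N = opnorm PX Q"
  define la where "la = lambda1 K Psi P"
  have N0: "0 \<le> N" and N1: "N \<le> 1" unfolding N_def using mk.opnorm_nonneg[OF mkQ] mk.opnorm_le1[OF mkQ] by auto
  have N4: "N ^ 4 = (N\<^sup>2)\<^sup>2" by simp
  have lim: "a * (1 - b\<^sup>2) * (1 - la) \<le> 1 - N ^ 4"
  proof (rule field_le_epsilon)
    fix e :: real assume e: "0 < e"
    define ep where "ep = min 1 ((e / 4)\<^sup>2)"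
    have ep0: "0 < ep" unfolding ep_def using e by simp
    have ep1: "ep \<le> 1" unfolding ep_def by simp
    have "a * (1 - b\<^sup>2) * (1 - la) \<le> 1 - (N\<^sup>2)\<^sup>2 + ep + 3 * sqrt ep"
      using approx_ineq[OF ep0 ep1] by (simp add: N_def la_def)
    moreover have "ep \<le> sqrt ep"
    proof -
      have "ep * ep \<le> ep * 1" using ep0 ep1 by (intro mult_left_mono) auto
      then have "ep\<^sup>2 \<le> ep" by (simp add: power2_eq_square)
      then show ?thesis using ep0 by (simp add: real_le_rsqrt)
    qed
    moreover have "sqrt ep \<le> e / 4"
    proof -
      have "sqrt ep \<le> sqrt ((e / 4)\<^sup>2)" unfolding ep_def by (intro real_sqrt_le_mono) simp
      then show ?thesis using e by simp
    qed
    ultimately show "a * (1 - b\<^sup>2) * (1 - la) \<le> 1 - N ^ 4 + e" using N4 by linarith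
  qed
  have a0: "0 \<le> a" and a1: "a \<le> 1" using a_nonneg a_le1 .
  have bb: "0 \<le> 1 - b\<^sup>2" using b_le1 b_nonneg by (simp add: power_le_one)
  have Nle: "N ^ 4 \<le> 1" using N0 N1 by (simp add: power_le_one)
  show ?thesis
  proof (cases "0 \<le> 1 - la")
    case True
    have "a\<^sup>2 * (1 - b\<^sup>2) * (1 - la) = a * (a * (1 - b\<^sup>2) * (1 - la))" by (simp add: power2_eq_square)
    also have "\<dots> \<le> 1 * (a * (1 - b\<^sup>2) * (1 - la))"
      using a1 a0 bb True by (intro mult_right_mono) auto
    also have "\<dots> \<le> 1 - N ^ 4" using lim by simp
    finally show ?thesis by (simp add: N_def la_def)
  next
    case False
    have "a\<^sup>2 * (1 - b\<^sup>2) * (1 - la) \<le> 0"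
      using False a0 bb by (intro mult_nonneg_nonpos) auto
    then show ?thesis using Nle by (simp add: N_def la_def)
  qed
qed

end


theorem mainTheorem5:
  fixes K :: "'k set" and Psi :: "'k \<Rightarrow> 'z measure"
    and P :: "'k \<times> 'z \<Rightarrow> ('k \<times> 'z) measure"
    and Pk :: "'k \<Rightarrow> 'z \<Rightarrow> 'z measure" and c :: "'k \<Rightarrow> real" and t :: nat
  assumes K: "countable K" "K \<noteq> {}"
    and Z_ne: "\<And>k. k \<in> K \<Longrightarrow> space (Psi k) \<noteq> {}"
    and Psi_pos: "\<And>k. k \<in> K \<Longrightarrow> emeasure (Psi k) (space (Psi k)) \<noteq> 0"
    and Psi_fin: "\<And>k. k \<in> K \<Longrightarrow> emeasure (Psi k) (space (Psi k)) < \<infinity>"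
    and tot_fin: "total_mass K Psi < \<infinity>"
    and P_kernel: "P \<in> PiX K Psi \<rightarrow>\<^sub>M prob_algebra (PiX K Psi)"
    and P_inv: "bind (PiX K Psi) P = PiX K Psi"
    and t_pos: "t > 0"
    and Pk_kernel: "\<And>k. k \<in> K \<Longrightarrow> Pk k \<in> Psi k \<rightarrow>\<^sub>M prob_algebra (Psi k)"
    and Pk_inv: "\<And>k. k \<in> K \<Longrightarrow> bind (normalise (Psi k)) (Pk k) = normalise (Psi k)"
    and Pk_gap: "\<And>k. k \<in> K \<Longrightarrow> opnorm (normalise (Psi k)) (kpow (Psi k) (Pk k) t) < 1"
    and c_pos: "\<And>k. k \<in> K \<Longrightarrow> c k > 0"
    and minor: "\<And>k z A. k \<in> K \<Longrightarrow> z \<in> space (Psi k) \<Longrightarrow> A \<in> sets (Psi k) \<Longrightarrow>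
                  measure (P (k, z)) ({k} \<times> A) \<ge> c k * measure (Pk k z) A"
  shows "1 - (opnorm (PiX K Psi) (kpow (PiX K Psi) P t)) ^ 4 \<ge>
           (INF k\<in>K. c k ^ t)\<^sup>2
           * (1 - (SUP k\<in>K. opnorm (normalise (Psi k)) (kpow (Psi k) (Pk k) t))\<^sup>2)
           * (1 - lambda1 K Psi P)"
proof -
  interpret thm5 K Psi P Pk c t
    by (unfold_locales) (use assms in auto)
  show ?thesis using final by (simp add: Q_def a_def b_def)
qed

end
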